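(* Assume the general-case standing hypotheses, let $\sigma\in(0,1)$, $\mu^+=\sigma\mu$, $C_1>0$. Then there exist $\rho>0$, $\bar\mu\in(0,\hat\mu]$ and $C>0$ such that for all $\mu\in(0,\bar\mu]$ and all $(x,\lambda)\in\mathcal B((x^*,\lambda^* ),\delta)$ with $l<x<u$, $\lambda^l,\lambda^u>0$, $\|(x,\lambda)-(x^\mu,\lambda^\mu)\|<\rho$, $\|F_\mu(x,\lambda)\|\le C_1\mu$, the direction $(\Delta x,\Delta\lambda^l,\Delta\lambda^u)$ below is well defined and $$\|(\Delta x,\Delta\lambda^l,\Delta\lambda^u)-(\Delta x^N,\Delta\lambda^{l,N},\Delta\lambda^{u,N})\|\le C\mu^2.$$ Construction (write $H=\nabla^2f(x)$): (i) for $i\in\mathcal A_x$, $\Delta x_i\in\{\Delta x_i^S,\Delta x_i^C\}$ (arbitrary per index). (ii) $\Delta x_{\mathcal I_x}=\Delta x^{ls}_{\mathcal I_x}$ is the solution of the linear system, for $i\in\mathcal I_x$, $$\sum_{j\in\mathcal I_x}H_{ij}\Delta x_j+\Big(\frac{\lambda^l_i}{x_i-l_i}+\frac{\lambda^u_i}{u_i-x_i}\Big)\Delta x_i=-[\nabla f(x)]_i-\sum_{j\in\mathcal A_x}H_{ij}\Delta x_j+\frac{\mu^+}{x_i-l_i}-\frac{\mu^+}{u_i-x_i}.$$ (iii) For $i\in\mathcal I_l$ set $\Delta\lambda^{l,ls}_i=-\lambda^l_i+\frac{\mu^+-\lambda^l_i\Delta x_i}{x_i-l_i}$, and for $i\in\mathcal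 I_u$ set $\Delta\lambda^{u,ls}_i=-\lambda^u_i+\frac{\mu^++\lambda^u_i\Delta x_i}{u_i-x_i}$; take $\Delta\lambda^l_i\in\{\Delta\lambda^{l,ls}_i,\Delta\lambda^{l,C}_i\}$ ($i\in\mathcal I_l$) and $\Delta\lambda^u_i\in\{\Delta\lambda^{u,ls}_i,\Delta\lambda^{u,C}_i\}$ ($i\in\mathcal I_u$). (iv) For $i\in\mathcal A_x$ let $r_i=[\nabla f(x)]_i-\lambda^l_i+\lambda^u_i+\sum_{j=1}^nH_{ij}\Delta x_j-[i\in\mathcal I_l]\Delta\lambda^{l,ls}_i+[i\in\mathcal I_u]\Delta\lambda^{u,ls}_i$. For $i\in\mathcal A_l$ take $\Delta\lambda^l_i\in\{\Delta\lambda^{l,b}_i,\Delta\lambda^{l,ls}_i\}$ with $\Delta\lambda^{l,b}_i=r_i$ and $\Delta\lambda^{l,ls}_i=\frac{r_i-(x_i-l_i)\big(\lambda^l_i(x_i-l_i)-\mu^++\lambda^l_i\Delta x_i\big)}{1+(x_i-l_i)^2}$; for $i\in\mathcal A_u$ take $\Delta\lambda^u_i\in\{\Delta\lambda^{u,b}_i,\Delta\lambda^{u,ls}_i\}$ with $\Delta\lambda^{u,b}_i=-r_i$ and $\Delta\lambda^{u,ls}_i=-\frac{r_i+(u_i-x_i)\big(\lambda^u_i(u_i-x_i)-\mu^+-\lambda^u_i\Delta x_i\big)}{1+(u_i-x_i)^2}$. Here $[\cdot]$ is 1 if the condition holds and 0 otherwise.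
   Context: General problem: minimize $f(x)$ subject to $l\le x\le u$, $l,u\in\mathbb R^n$, $l<u$, $f$ twice continuously differentiable with locally Lipschitz Hessian; multipliers $\lambda=(\lambda^l,\lambda^u)$. $F_\mu(x,\lambda)=\begin{bmatrix}\nabla f(x)-\lambda^l+\lambda^u\\ \Lambda^l(X-L)e-\mu e\\ \Lambda^u(U-X)e-\mu e\end{bmatrix}$ with $X,L,U,\Lambda^l,\Lambda^u$ the diagonal matrices of $x,l,u,\lambda^l,\lambda^u$ and $e$ all-ones; $F'(x,\lambda)=\begin{bmatrix}\nabla^2f(x)&-I&I\\ \Lambda^l&X-L&0\\ -\Lambda^u&0&U-X\end{bmatrix}$; the Newton direction solves $F'(x,\lambda)(\Delta x^N,\Delta\lambda^{l,N},\Delta\lambda^{u,N})=-F_{\mu^+}(x,\lambda)$. Euclidean norms. Partial approximations: $\Delta x_i^S=-\frac1{d_i}\big([\nabla f(x)]_i-\mu^+[\frac1{x_i-l_i}-\frac1{u_i-x_i}]\big)$ with $d_i=[\nabla^2f(x)]_{ii}+\frac{\lambda^l_i}{x_i-l_i}+\frac{\lambda^u_i}{u_i-x_i}$; $\Delta x^C_i=-(x_i-l_i)+\mu^+/\lambda^l_i$ for $i\in\mathcal A_l$, $\Delta x_i^C=(u_i-x_i)-\mu^+/\lambda^u_i$ for $i\in\mathcal A_u$; $\Delta\lambda^{l,C}_i=-\lambda^l_i+\mu^+/(x_i-l_i)$, $\Delta\lambda^{u,C}_i=-\lambda^u_i+\mu^+/(u_i-x_i)$. Sets: $\mathcal A_l=\{i:x^*_i=l_i\}$,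 $\mathcal A_u=\{i:x^*_i=u_i\}$, $\mathcal I_l,\mathcal I_u$ complements, $\mathcal A_x=\mathcal A_l\cup\mathcal A_u$, $\mathcal I_x$ its complement. Standing hypotheses: $\nabla f(x^* )-\lambda^{l*}+\lambda^{u*}=0$, $l\le x^*\le u$, $\lambda^{l*},\lambda^{u*}\ge0$, $(x^*-l)_i\lambda^{l*}_i=0$, $(u-x^* )_i\lambda^{u*}_i=0$, $(x^*-l)+\lambda^{l*}>0$, $(u-x^* )+\lambda^{u*}>0$, $[\nabla^2f(x^* )]_{\mathcal I_x\mathcal I_x}\succ0$; $\delta>0$ with $F'$ nonsingular and boundedly invertible on $\mathcal B((x^*,\lambda^* ),\delta)$; $\hat\mu>0$ with a Lipschitz barrier trajectory $(x^\mu,\lambda^\mu)\in\mathcal B((x^*,\lambda^* ),\delta)$, $F_\mu(x^\mu,\lambda^\mu)=0$, $\|(x^\mu,\lambda^\mu)-(x^*,\lambda^* )\|\le C_4\mu$ for $\mu\in(0,\hat\mu]$. *)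

theory Defs
  imports "HOL-Analysis.Analysis"
begin

text \<open>Vectors in R^n are modelled as real^'n (Euclidean norm); points (x, lambda^l, lambda^u)
  are triples in (real^'n) \<times> (real^'n) \<times> (real^'n), whose product norm is the Euclidean norm
  of the concatenated vector.  g is the gradient map, H a (Hessian) matrix, with
  (H *v v)$i = sum_j H$i$j * v$j.\<close>

definition Fmu :: "(real^'n \<Rightarrow> real^'n) \<Rightarrow> real^'n \<Rightarrow> real^'n \<Rightarrow> real
     \<Rightarrow> real^'n \<Rightarrow> real^'n \<Rightarrow> real^'n \<Rightarrow> (real^'n) \<times> (real^'n) \<times> (real^'n)" where
  "Fmu g l u \<mu> x ll lu =
     (g x - ll + lu,
      \<chi> i. ll$i * (x$i - l$i) - \<mu>,
      \<chi> i. lu$i * (u$i - x$i) - \<mu>)"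

definition Fprime :: "(real^'n \<Rightarrow> real^'n^'n) \<Rightarrow> real^'n \<Rightarrow> real^'n
     \<Rightarrow> real^'n \<Rightarrow> real^'n \<Rightarrow> real^'n
     \<Rightarrow> (real^'n) \<times> (real^'n) \<times> (real^'n) \<Rightarrow> (real^'n) \<times> (real^'n) \<times> (real^'n)" where
  "Fprime hess l u x ll lu d =
     (case d of (dx, dll, dlu) \<Rightarrow>
       (hess x *v dx - dll + dlu,
        \<chi> i. ll$i * dx$i + (x$i - l$i) * dll$i,
        \<chi> i. - lu$i * dx$i + (u$i - x$i) * dlu$i))"

definition dcoef :: "real^'n^'n \<Rightarrow> real^'n \<Rightarrow> real^'n \<Rightarrow> real^'n \<Rightarrow> real^'n \<Rightarrow> real^'n \<Rightarrow> 'n \<Rightarrow> real" where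
  "dcoef H l u x ll lu i = H$i$i + ll$i / (x$i - l$i) + lu$i / (u$i - x$i)"

definition dxS :: "real^'n \<Rightarrow> real^'n^'n \<Rightarrow> real^'n \<Rightarrow> real^'n \<Rightarrow> real^'n \<Rightarrow> real^'n \<Rightarrow> real^'n
     \<Rightarrow> real \<Rightarrow> 'n \<Rightarrow> real" where
  "dxS gx H l u x ll lu mup i =
     - (1 / dcoef H l u x ll lu i) * (gx$i - mup * (1 / (x$i - l$i) - 1 / (u$i - x$i)))"

definition dxCl :: "real^'n \<Rightarrow> real^'n \<Rightarrow> real^'n \<Rightarrow> real \<Rightarrow> 'n \<Rightarrow> real" where
  "dxCl l x ll mup i = - (x$i - l$i) + mup / ll$i"

definition dxCu :: "real^'n \<Rightarrow> real^'n \<Rightarrow> real^'n \<Rightarrow> real \<Rightarrow> 'n \<Rightarrow> real" where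
  "dxCu u x lu mup i = (u$i - x$i) - mup / lu$i"

definition dllC :: "real^'n \<Rightarrow> real^'n \<Rightarrow> real^'n \<Rightarrow> real \<Rightarrow> 'n \<Rightarrow> real" where
  "dllC l x ll mup i = - ll$i + mup / (x$i - l$i)"

definition dluC :: "real^'n \<Rightarrow> real^'n \<Rightarrow> real^'n \<Rightarrow> real \<Rightarrow> 'n \<Rightarrow> real" where
  "dluC u x lu mup i = - lu$i + mup / (u$i - x$i)"

definition ls_row :: "real^'n \<Rightarrow> real^'n^'n \<Rightarrow> real^'n \<Rightarrow> real^'n \<Rightarrow> real^'n \<Rightarrow> real^'n \<Rightarrow> real^'n
     \<Rightarrow> real \<Rightarrow> 'n set \<Rightarrow> real^'n \<Rightarrow> 'n \<Rightarrow> bool" where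
  "ls_row gx H l u x ll lu mup Ax dx i \<longleftrightarrow>
     (\<Sum>j\<in>-Ax. H$i$j * dx$j) + (ll$i / (x$i - l$i) + lu$i / (u$i - x$i)) * dx$i
     = - gx$i - (\<Sum>j\<in>Ax. H$i$j * dx$j) + mup / (x$i - l$i) - mup / (u$i - x$i)"

definition dll_lsI :: "real^'n \<Rightarrow> real^'n \<Rightarrow> real^'n \<Rightarrow> real \<Rightarrow> real^'n \<Rightarrow> 'n \<Rightarrow> real" where
  "dll_lsI l x ll mup dx i = - ll$i + (mup - ll$i * dx$i) / (x$i - l$i)"

definition dlu_lsI :: "real^'n \<Rightarrow> real^'n \<Rightarrow> real^'n \<Rightarrow> real \<Rightarrow> real^'n \<Rightarrow> 'n \<Rightarrow> real" where
  "dlu_lsI u x lu mup dx i = - lu$i + (mup + lu$i * dx$i) / (u$i - x$i)"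

definition resid :: "real^'n \<Rightarrow> real^'n^'n \<Rightarrow> real^'n \<Rightarrow> real^'n \<Rightarrow> real^'n \<Rightarrow> real^'n \<Rightarrow> real^'n
     \<Rightarrow> real \<Rightarrow> 'n set \<Rightarrow> 'n set \<Rightarrow> real^'n \<Rightarrow> 'n \<Rightarrow> real" where
  "resid gx H l u x ll lu mup Il Iu dx i =
     gx$i - ll$i + lu$i + (\<Sum>j\<in>UNIV. H$i$j * dx$j)
     - (if i \<in> Il then dll_lsI l x ll mup dx i else 0)
     + (if i \<in> Iu then dlu_lsI u x lu mup dx i else 0)"

definition dll_lsA :: "real^'n \<Rightarrow> real^'n \<Rightarrow> real^'n \<Rightarrow> real \<Rightarrow> real^'n \<Rightarrow> real \<Rightarrow> 'n \<Rightarrow> real" where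
  "dll_lsA l x ll mup dx r i =
     (r - (x$i - l$i) * (ll$i * (x$i - l$i) - mup + ll$i * dx$i)) / (1 + (x$i - l$i)^2)"

definition dlu_lsA :: "real^'n \<Rightarrow> real^'n \<Rightarrow> real^'n \<Rightarrow> real \<Rightarrow> real^'n \<Rightarrow> real \<Rightarrow> 'n \<Rightarrow> real" where
  "dlu_lsA u x lu mup dx r i =
     - (r + (u$i - x$i) * (lu$i * (u$i - x$i) - mup - lu$i * dx$i)) / (1 + (u$i - x$i)^2)"

end

theory Submission
  imports Defs
begin


lemma sum_compl_split:
  fixes f :: "'n::finite \<Rightarrow> real"
  shows "(\<Sum>j\<in>-A. f j) + (\<Sum>j\<in>A. f j) = (\<Sum>j\<in>UNIV. f j)"
  by (metis add.commute Compl_eq_Diff_UNIV finite subset_UNIV sum.subset_diff)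

lemma ls_row_iff:
  "ls_row gx H l u x ll lu mup A dx i \<longleftrightarrow>
   (H *v dx)$i + (ll$i / (x$i - l$i) + lu$i / (u$i - x$i)) * dx$i
     = - gx$i + mup / (x$i - l$i) - mup / (u$i - x$i)"
proof -
  have "(H *v dx)$i = (\<Sum>j\<in>-A. H$i$j * dx$j) + (\<Sum>j\<in>A. H$i$j * dx$j)"
    by (simp add: matrix_vector_mult_def sum_compl_split)
  then show ?thesis unfolding ls_row_def by argo
qed

lemma mv_bound:
  fixes A :: "real^'n^'n"
  assumes "\<And>i j. \<bar>A$i$j\<bar> \<le> B"
  shows "norm (A *v v) \<le> real CARD('n) * real CARD('n) * B * norm v"
proof -
  have "norm (A *v v) \<le> onorm ((*v) A) * norm v"
    by (rule onorm[OF matrix_vector_mul_bounded_linear])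
  also have "\<dots> \<le> real CARD('n) * real CARD('n) * B * norm v"
    by (rule mult_right_mono[OF onorm_le_matrix_component[OF assms]]) simp
  finally show ?thesis .
qed

lemma newton_comp:
  fixes H :: "real^'n^'n"
  assumes N: "Fprime hess l u x ll lu (a, b, c) = - Fmu grad l u mp x ll lu"
    and H: "H = hess x"
    and pl: "x$i - l$i > 0" and pu: "u$i - x$i > 0"
  shows "b$i = dll_lsI l x ll mp a i"
    and "c$i = dlu_lsI u x lu mp a i"
    and "(H *v a)$i - b$i + c$i = -(grad x$i - ll$i + lu$i)"
    and "(H *v a)$i + (ll$i / (x$i - l$i) + lu$i / (u$i - x$i)) * a$i
          = - grad x$i + mp / (x$i - l$i) - mp / (u$i - x$i)"
proof -
  from N have e1: "H *v a - b + c = -(grad x - ll + lu)"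
    and e2: "ll$i * a$i + (x$i - l$i) * b$i = -(ll$i * (x$i - l$i) - mp)"
    and e3: "- lu$i * a$i + (u$i - x$i) * c$i = -(lu$i * (u$i - x$i) - mp)"
    by (auto simp: Fprime_def Fmu_def H vec_eq_iff)
  show b: "b$i = dll_lsI l x ll mp a i" using e2 pl
    by (simp add: dll_lsI_def field_simps)
  show c: "c$i = dlu_lsI u x lu mp a i" using e3 pu
    by (simp add: dlu_lsI_def field_simps)
  show r: "(H *v a)$i - b$i + c$i = -(grad x$i - ll$i + lu$i)"
    using e1 by (simp add: vec_eq_iff)
  show "(H *v a)$i + (ll$i / (x$i - l$i) + lu$i / (u$i - x$i)) * a$i
          = - grad x$i + mp / (x$i - l$i) - mp / (u$i - x$i)"
  proof -
    have bb: "b$i = - ll$i + mp / (x$i - l$i) - ll$i / (x$i - l$i) * a$i"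
      using b pl by (simp add: dll_lsI_def diff_divide_distrib)
    have cc: "c$i = - lu$i + mp / (u$i - x$i) + lu$i / (u$i - x$i) * a$i"
      using c pu by (simp add: dlu_lsI_def add_divide_distrib)
    show ?thesis using r unfolding bb cc by (simp add: algebra_simps)
  qed
qed




lemma aux_d1: "t \<noteq> 0 \<Longrightarrow> (-L + (m - L*p)/t) - (-L + (m - L*q)/t) = -(L/t)*(p-q)" for t L m p q :: real
  by (simp add: field_simps)
lemma aux_d2: "t \<noteq> 0 \<Longrightarrow> (-L + (m + L*p)/t) - (-L + (m + L*q)/t) = (L/t)*(p-q)" for t L m p q :: real
  by (simp add: field_simps)
lemma aux_d3: "t \<noteq> 0 \<Longrightarrow> (-L + m/t) - (-L + (m - L*q)/t) = (L/t)*q" for t L m q :: real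
  by (simp add: field_simps)
lemma aux_d4: "t \<noteq> 0 \<Longrightarrow> (-L + m/t) - (-L + (m + L*q)/t) = -(L/t)*q" for t L m q :: real
  by (simp add: field_simps)

lemma dllI_diff: "x$i - l$i \<noteq> 0 \<Longrightarrow>
  dll_lsI l x ll mp v i - dll_lsI l x ll mp w i = - (ll$i/(x$i-l$i)) * (v$i - w$i)"
  unfolding dll_lsI_def by (rule aux_d1)

lemma dluI_diff: "u$i - x$i \<noteq> 0 \<Longrightarrow>
  dlu_lsI u x lu mp v i - dlu_lsI u x lu mp w i = (lu$i/(u$i-x$i)) * (v$i - w$i)"
  unfolding dlu_lsI_def by (rule aux_d2)

lemma dllC_diff: "x$i - l$i \<noteq> 0 \<Longrightarrow>
  dllC l x ll mp i - dll_lsI l x ll mp w i = (ll$i/(x$i-l$i)) * w$i"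
  unfolding dll_lsI_def dllC_def by (rule aux_d3)

lemma dluC_diff: "u$i - x$i \<noteq> 0 \<Longrightarrow>
  dluC u x lu mp i - dlu_lsI u x lu mp w i = - (lu$i/(u$i-x$i)) * w$i"
  unfolding dlu_lsI_def dluC_def by (rule aux_d4)

lemma lsA_alg:
  fixes t b L mp r d a :: real
  assumes h: "t*b + L*t - mp + L*a = 0"
  shows "(r - t*(L*t - mp + L*d))/(1+t^2) - b = ((r - b) - t*L*(d - a))/(1+t^2)"
proof -
  have pos: "1 + t^2 > 0" by (simp add: add_pos_nonneg)
  have "(r - t*(L*t - mp + L*d)) - b*(1+t^2) = ((r - b) - t*L*(d - a)) - t*(t*b + L*t - mp + L*a)"
    by (simp add: algebra_simps power2_eq_square)
  then have "(r - t*(L*t - mp + L*d)) - b*(1+t^2) = ((r - b) - t*L*(d - a))" using h by simp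
  then show ?thesis using pos by (simp add: field_simps)
qed

lemma luA_alg:
  fixes q c U mp r d a :: real
  assumes h: "q*c + U*q - mp - U*a = 0"
  shows "- (r + q*(U*q - mp - U*d))/(1+q^2) - c = ((-r - c) + q*U*(d - a))/(1+q^2)"
proof -
  have pos: "1 + q^2 > 0" by (simp add: add_pos_nonneg)
  have "- (r + q*(U*q - mp - U*d)) - c*(1+q^2) = ((-r - c) + q*U*(d - a)) - q*(q*c + U*q - mp - U*a)"
    by (simp add: algebra_simps power2_eq_square)
  then have "- (r + q*(U*q - mp - U*d)) - c*(1+q^2) = ((-r - c) + q*U*(d - a))" using h by simp
  then show ?thesis using pos by (simp add: field_simps)
qed

lemma div1_le: "(1::real) + t^2 > 0 \<Longrightarrow> \<bar>X / (1+t^2)\<bar> \<le> \<bar>X\<bar>"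
  by (simp add: abs_divide divide_le_eq mult_le_cancel_left1 abs_of_pos)

lemma core:
  fixes H :: "real^'n^'n" and g l u x ll lu a b c dx dll dlu :: "real^'n"
    and Al Au :: "'n set" and Hb Kd Kp c0 m Lb \<mu> mp :: real
  defines "K1 \<equiv> 8*Hb*Kd*Kp/c0 + 2*Kp*Kd/c0"
  defines "K2 \<equiv> (1 + Hb/m) * real CARD('n) * K1"
  defines "K3 \<equiv> (2*Kp/c0)*K2 + (2*Kp/c0)*Kd + Hb*K2 + Lb*K2"
  assumes pos: "\<And>i. l$i < x$i \<and> x$i < u$i \<and> ll$i > 0 \<and> lu$i > 0"
    and disj: "Al \<inter> Au = {}"
    and c0: "c0 > 0" and Kp: "Kp > 0"
    and mu: "0 < \<mu>" "\<mu> \<le> 1" "Kp*\<mu> \<le> 1" "4*Kp*Hb*\<mu> \<le> c0"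
    and Hb0: "Hb \<ge> 0" and Hent: "\<And>i j. \<bar>H$i$j\<bar> \<le> Hb"
    and Hnorm: "\<And>v. norm (H *v v) \<le> Hb * norm v"
    and m: "m > 0" and pd: "\<And>v. (\<forall>i\<in>Al\<union>Au. v$i = 0) \<Longrightarrow> m * (norm v)^2 \<le> v \<bullet> (H *v v)"
    and Kd: "norm (a,b,c) \<le> Kd*\<mu>"
    and Lb: "\<And>i. ll$i \<le> Lb \<and> lu$i \<le> Lb"
    and lowA: "\<And>i. i\<in>Al \<Longrightarrow> ll$i \<ge> c0/2 \<and> x$i - l$i \<le> Kp*\<mu>"
    and lowI: "\<And>i. i\<notin>Al \<Longrightarrow> x$i - l$i \<ge> c0/2 \<and> ll$i \<le> Kp*\<mu>"
    and upA: "\<And>i. i\<in>Au \<Longrightarrow> lu$i \<ge> c0/2 \<and> u$i - x$i \<le> Kp*\<mu>"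
    and upI: "\<And>i. i\<notin>Au \<Longrightarrow> u$i - x$i \<ge> c0/2 \<and> lu$i \<le> Kp*\<mu>"
    and nb: "\<And>i. b$i = dll_lsI l x ll mp a i"
    and nc: "\<And>i. c$i = dlu_lsI u x lu mp a i"
    and nr: "\<And>i. (H *v a)$i - b$i + c$i = -(g$i - ll$i + lu$i)"
    and nd: "\<And>i. (H *v a)$i + (ll$i / (x$i - l$i) + lu$i / (u$i - x$i)) * a$i
          = - g$i + mp / (x$i - l$i) - mp / (u$i - x$i)"
    and hAl: "\<forall>i\<in>Al. dx$i = dxS g H l u x ll lu mp i \<or> dx$i = dxCl l x ll mp i"
    and hAu: "\<forall>i\<in>Au. dx$i = dxS g H l u x ll lu mp i \<or> dx$i = dxCu u x lu mp i"
    and hI: "\<forall>i\<in>-(Al \<union> Au). ls_row g H l u x ll lu mp (Al \<union> Au) dx i"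
    and hlI: "\<forall>i\<in>-Al. dll$i = dll_lsI l x ll mp dx i \<or> dll$i = dllC l x ll mp i"
    and huI: "\<forall>i\<in>-Au. dlu$i = dlu_lsI u x lu mp dx i \<or> dlu$i = dluC u x lu mp i"
    and hlA: "\<forall>i\<in>Al. dll$i = resid g H l u x ll lu mp (-Al) (-Au) dx i
                     \<or> dll$i = dll_lsA l x ll mp dx (resid g H l u x ll lu mp (-Al) (-Au) dx i) i"
    and huA: "\<forall>i\<in>Au. dlu$i = - resid g H l u x ll lu mp (-Al) (-Au) dx i
                     \<or> dlu$i = dlu_lsA u x lu mp dx (resid g H l u x ll lu mp (-Al) (-Au) dx i) i"
  shows "norm ((dx, dll, dlu) - (a, b, c)) \<le> (K2 + 2 * real CARD('n) * K3) * \<mu>^2"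
proof -
  have Kd0: "Kd \<ge> 0"
  proof -
    have "0 \<le> Kd*\<mu>" using Kd norm_ge_zero[of "(a,b,c)"] by linarith
    then show ?thesis using mu(1) by (simp add: zero_le_mult_iff)
  qed
  have na: "norm a \<le> Kd*\<mu>" using Kd norm_fst_le[of a "(b,c)"] by linarith
  have nbb: "norm b \<le> Kd*\<mu>" using Kd norm_fst_le[of b c] norm_snd_le[of "(b,c)" a] by linarith
  have ncc: "norm c \<le> Kd*\<mu>" using Kd norm_snd_le[of c b] norm_snd_le[of "(b,c)" a] by linarith
  have aa: "\<bar>a$i\<bar> \<le> Kd*\<mu>" for i using na component_le_norm_cart[of a i] by linarith
  have bi: "\<bar>b$i\<bar> \<le> Kd*\<mu>" for i using nbb component_le_norm_cart[of b i] by linarith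
  have ci: "\<bar>c$i\<bar> \<le> Kd*\<mu>" for i using ncc component_le_norm_cart[of c i] by linarith
  have Ha: "\<bar>(H *v a)$i\<bar> \<le> Hb*(Kd*\<mu>)" for i
    using component_le_norm_cart[of "H *v a" i] Hnorm[of a] mult_left_mono[OF na Hb0] by linarith
  define D where "D i = ll$i / (x$i - l$i) + lu$i / (u$i - x$i)" for i
  have D0: "D i \<ge> 0" for i using pos[of i] unfolding D_def by simp
  define e where "e = dx - a"
  have Q0: "2*Kp/c0 \<ge> 0" using Kp c0 by simp
  have eS: "\<bar>e$i\<bar> \<le> (8*Hb*Kd*Kp/c0)*\<mu>^2"
    if iA: "i \<in> Al \<union> Au" and dxi: "dx$i = dxS g H l u x ll lu mp i" for i
  proof -
    have p: "l$i < x$i" "x$i < u$i" "ll$i > 0" "lu$i > 0" using pos[of i] by auto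
    have big: "c0/(2*Kp*\<mu>) \<le> D i"
    proof (cases "i \<in> Al")
      case True
      have "(c0/2)/(Kp*\<mu>) \<le> ll$i / (x$i - l$i)"
        by (rule frac_le) (use lowA[OF True] p c0 in auto)
      moreover have "lu$i / (u$i - x$i) \<ge> 0" using p by simp
      ultimately show ?thesis unfolding D_def by simp
    next
      case False
      then have T: "i \<in> Au" using iA by auto
      have "(c0/2)/(Kp*\<mu>) \<le> lu$i / (u$i - x$i)"
        by (rule frac_le) (use upA[OF T] p c0 in auto)
      moreover have "ll$i / (x$i - l$i) \<ge> 0" using p by simp
      ultimately show ?thesis unfolding D_def by simp
    qed
    have hb: "Hb \<le> c0/(4*Kp*\<mu>)" using mu Kp by (simp add: le_divide_eq mult.commute mult.left_commute)
    have eq2: "c0/(2*Kp*\<mu>) = 2 * (c0/(4*Kp*\<mu>))" by simp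
    define dc where "dc = dcoef H l u x ll lu i"
    have dcD: "dc = H$i$i + D i" unfolding dc_def dcoef_def D_def by simp
    have dcb: "dc \<ge> c0/(4*Kp*\<mu>)" using dcD big hb Hent[of i i] eq2 by linarith
    have dcpos: "dc > 0" using dcb c0 Kp mu by (smt (verit) divide_pos_pos mult_pos_pos)
    have "dc * e$i = (H *v a)$i - H$i$i * a$i"
    proof -
      have A: "dc * dx$i = - g$i + mp / (x$i - l$i) - mp / (u$i - x$i)"
      proof -
        define Y where "Y = g$i - mp * (1 / (x$i - l$i) - 1 / (u$i - x$i))"
        have "dx$i = - (1/dc) * Y" using dxi unfolding dxS_def dc_def Y_def by simp
        then have "dc * dx$i = - Y" using dcpos by simp
        then show ?thesis unfolding Y_def by (simp add: right_diff_distrib)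
      qed
      have B: "(H *v a)$i + D i * a$i = - g$i + mp / (x$i - l$i) - mp / (u$i - x$i)"
        using nd[of i] unfolding D_def .
      have C: "dc * a$i = H$i$i * a$i + D i * a$i" unfolding dcD by (simp add: distrib_right)
      have "dc * e$i = dc * dx$i - dc * a$i" unfolding e_def by (simp add: right_diff_distrib)
      then show ?thesis using A B C by linarith
    qed
    then have ee: "e$i = ((H *v a)$i - H$i$i * a$i) / dc" using dcpos by (simp add: field_simps)
    have num: "\<bar>(H *v a)$i - H$i$i * a$i\<bar> \<le> 2*Hb*Kd*\<mu>"
    proof -
      have "\<bar>H$i$i * a$i\<bar> \<le> Hb*(Kd*\<mu>)"
        unfolding abs_mult by (rule mult_mono) (use Hent aa Hb0 in auto)
      then show ?thesis using Ha[of i] by linarith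
    qed
    have "\<bar>e$i\<bar> \<le> (2*Hb*Kd*\<mu>) / (c0/(4*Kp*\<mu>))"
      unfolding ee abs_divide
      by (rule frac_le) (use num dcb dcpos c0 Kp mu in auto)
    also have "\<dots> = (8*Hb*Kd*Kp/c0)*\<mu>^2" using c0 Kp mu by (simp add: field_simps power2_eq_square)
    finally show ?thesis .
  qed
  have eCl: "\<bar>e$i\<bar> \<le> (2*Kp*Kd/c0)*\<mu>^2"
    if iA: "i \<in> Al" and dxi: "dx$i = dxCl l x ll mp i" for i
  proof -
    have p: "l$i < x$i" "x$i < u$i" "ll$i > 0" "lu$i > 0" using pos[of i] by auto
    have "(x$i - l$i) * b$i = - ll$i * (x$i - l$i) + mp - ll$i * a$i"
      using nb[of i] p by (simp add: dll_lsI_def field_simps)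
    then have ee: "e$i = (x$i - l$i) * b$i / ll$i"
      using dxi p unfolding e_def dxCl_def by (simp add: field_simps)
    have "\<bar>e$i\<bar> \<le> ((Kp*\<mu>)*(Kd*\<mu>)) / (c0/2)"
      unfolding ee abs_divide abs_mult
      by (rule frac_le) (use lowA[OF iA] p bi[of i] c0 Kp mu Kd0 in \<open>auto intro!: mult_mono\<close>)
    also have "\<dots> = (2*Kp*Kd/c0)*\<mu>^2" using c0 by (simp add: field_simps power2_eq_square)
    finally show ?thesis .
  qed
  have eCu: "\<bar>e$i\<bar> \<le> (2*Kp*Kd/c0)*\<mu>^2"
    if iA: "i \<in> Au" and dxi: "dx$i = dxCu u x lu mp i" for i
  proof -
    have p: "l$i < x$i" "x$i < u$i" "ll$i > 0" "lu$i > 0" using pos[of i] by auto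
    have "(u$i - x$i) * c$i = - lu$i * (u$i - x$i) + mp + lu$i * a$i"
      using nc[of i] p by (simp add: dlu_lsI_def field_simps)
    then have ee: "e$i = - ((u$i - x$i) * c$i / lu$i)"
      using dxi p unfolding e_def dxCu_def by (simp add: field_simps)
    have "\<bar>e$i\<bar> \<le> ((Kp*\<mu>)*(Kd*\<mu>)) / (c0/2)"
      unfolding ee abs_minus_cancel abs_divide abs_mult
      by (rule frac_le) (use upA[OF iA] p ci[of i] c0 Kp mu Kd0 in \<open>auto intro!: mult_mono\<close>)
    also have "\<dots> = (2*Kp*Kd/c0)*\<mu>^2" using c0 by (simp add: field_simps power2_eq_square)
    finally show ?thesis .
  qed
  have K1a: "8*Hb*Kd*Kp/c0 \<ge> 0" "2*Kp*Kd/c0 \<ge> 0" using Hb0 Kd0 Kp c0 by auto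
  have K10: "K1 \<ge> 0" unfolding K1_def using K1a by simp
  have eA: "\<bar>e$i\<bar> \<le> K1*\<mu>^2" if "i \<in> Al \<union> Au" for i
  proof -
    have m2: "\<mu>^2 \<ge> 0" by simp
    have "\<bar>e$i\<bar> \<le> (8*Hb*Kd*Kp/c0)*\<mu>^2 \<or> \<bar>e$i\<bar> \<le> (2*Kp*Kd/c0)*\<mu>^2"
      using that hAl hAu eS eCl eCu by blast
    then show ?thesis unfolding K1_def distrib_right
      using mult_right_mono[OF K1a(1) m2] mult_right_mono[OF K1a(2) m2] by auto
  qed
  define z where "z = (\<chi> i. if i \<in> Al \<union> Au then e$i else 0)"
  define w where "w = e - z"
  have wA: "\<forall>i\<in>Al\<union>Au. w$i = 0" unfolding w_def z_def by simp
  have wI: "w$i = e$i" if "i \<notin> Al \<union> Au" for i using that unfolding w_def z_def by simp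
  have zI: "z$i = 0" if "i \<notin> Al \<union> Au" for i using that unfolding z_def by simp
  have nz: "norm z \<le> real CARD('n) * (K1*\<mu>^2)"
  proof -
    have "norm z \<le> (\<Sum>i\<in>UNIV. \<bar>z$i\<bar>)" by (rule norm_le_l1_cart)
    also have "\<dots> \<le> (\<Sum>i\<in>(UNIV::'n set). K1*\<mu>^2)"
      by (rule sum_mono) (use eA K10 in \<open>auto simp: z_def\<close>)
    finally show ?thesis by simp
  qed
  have Phi: "(H *v e)$i + D i * e$i = 0" if "i \<notin> Al \<union> Au" for i
  proof -
    have "ls_row g H l u x ll lu mp (Al \<union> Au) dx i" using hI that by auto
    then have "(H *v dx)$i + D i * dx$i = - g$i + mp / (x$i - l$i) - mp / (u$i - x$i)"
      unfolding ls_row_iff D_def .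
    moreover have "(H *v a)$i + D i * a$i = - g$i + mp / (x$i - l$i) - mp / (u$i - x$i)"
      using nd[of i] unfolding D_def .
    moreover have "(H *v e)$i = (H *v dx)$i - (H *v a)$i"
      unfolding e_def by (simp add: matrix_vector_mult_diff_distrib)
    moreover have "D i * e$i = D i * dx$i - D i * a$i" unfolding e_def by (simp add: right_diff_distrib)
    ultimately show ?thesis by linarith
  qed
  have key: "w$i * ((H *v w)$i + D i * w$i) = - (w$i * (H *v z)$i)" for i
  proof (cases "i \<in> Al \<union> Au")
    case True then show ?thesis using wA by simp
  next
    case False
    have "e = w + z" unfolding w_def by simp
    then have "(H *v e)$i = (H *v w)$i + (H *v z)$i" by (simp add: matrix_vector_right_distrib)
    then have "(H *v w)$i + D i * w$i = - (H *v z)$i"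
      using Phi[OF False] wI[OF False] by simp
    then show ?thesis by (metis mult_minus_right)
  qed
  have sumeq: "w \<bullet> (H *v w) + (\<Sum>i\<in>UNIV. D i * (w$i)^2) = - (w \<bullet> (H *v z))"
  proof -
    have "w \<bullet> (H *v w) + (\<Sum>i\<in>UNIV. D i * (w$i)^2) = (\<Sum>i\<in>UNIV. w$i * ((H *v w)$i + D i * w$i))"
      by (simp add: inner_vec_def sum.distrib[symmetric] algebra_simps power2_eq_square)
    also have "\<dots> = (\<Sum>i\<in>UNIV. - (w$i * (H *v z)$i))" using key by simp
    also have "\<dots> = - (w \<bullet> (H *v z))" by (simp add: inner_vec_def sum_negf)
    finally show ?thesis .
  qed
  have sD: "(\<Sum>i\<in>UNIV. D i * (w$i)^2) \<ge> 0" by (rule sum_nonneg) (use D0 in simp)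
  have "m * (norm w)^2 \<le> w \<bullet> (H *v w)" using pd wA by blast
  also have "\<dots> \<le> - (w \<bullet> (H *v z))" using sumeq sD by linarith
  also have "\<dots> \<le> norm w * norm (H *v z)"
    using Cauchy_Schwarz_ineq2[of w "H *v z"] by linarith
  also have "\<dots> \<le> norm w * (Hb * norm z)" by (rule mult_left_mono[OF Hnorm]) simp
  finally have mw: "m * (norm w)^2 \<le> norm w * (Hb * norm z)" .
  have nw: "norm w \<le> (Hb/m) * norm z"
  proof (cases "norm w = 0")
    case True then show ?thesis using Hb0 m by simp
  next
    case False
    then have "norm w > 0" by simp
    with mw have "m * norm w \<le> Hb * norm z" by (simp add: power2_eq_square mult_ac)
    then show ?thesis using m by (simp add: field_simps)
  qed
  have ne: "norm e \<le> K2*\<mu>^2"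
  proof -
    have "norm e \<le> norm w + norm z" unfolding w_def using norm_triangle_ineq[of "e - z" z] by simp
    also have "\<dots> \<le> (1 + Hb/m) * norm z" using nw by (simp add: algebra_simps)
    also have "\<dots> \<le> (1 + Hb/m) * (real CARD('n) * (K1*\<mu>^2))"
      by (rule mult_left_mono[OF nz]) (use Hb0 m in simp)
    also have "\<dots> = K2*\<mu>^2" unfolding K2_def by simp
    finally show ?thesis .
  qed
  have K20: "K2 \<ge> 0" unfolding K2_def using K10 Hb0 m by simp
  have ei: "\<bar>e$i\<bar> \<le> K2*\<mu>^2" for i using ne component_le_norm_cart[of e i] by linarith
  have He: "\<bar>(H *v e)$i\<bar> \<le> Hb*(K2*\<mu>^2)" for i
    using component_le_norm_cart[of "H *v e" i] Hnorm[of e] mult_left_mono[OF ne Hb0] by linarith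
  define Q where "Q = 2*Kp/c0"
  have Q0': "Q \<ge> 0" unfolding Q_def using Q0 .
  have qlI: "ll$i/(x$i-l$i) \<le> Q*\<mu>" if "i \<notin> Al" for i
  proof -
    have "ll$i/(x$i-l$i) \<le> (Kp*\<mu>)/(c0/2)"
      by (rule frac_le) (use lowI[OF that] pos[of i] c0 Kp mu in auto)
    then show ?thesis unfolding Q_def by (simp add: field_simps)
  qed
  have quI: "lu$i/(u$i-x$i) \<le> Q*\<mu>" if "i \<notin> Au" for i
  proof -
    have "lu$i/(u$i-x$i) \<le> (Kp*\<mu>)/(c0/2)"
      by (rule frac_le) (use upI[OF that] pos[of i] c0 Kp mu in auto)
    then show ?thesis unfolding Q_def by (simp add: field_simps)
  qed
  have qlI1: "ll$i/(x$i-l$i) \<le> Q" if "i \<notin> Al" for i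
    using qlI[OF that] mult_left_mono[OF mu(2) Q0'] by simp
  have quI1: "lu$i/(u$i-x$i) \<le> Q" if "i \<notin> Au" for i
    using quI[OF that] mult_left_mono[OF mu(2) Q0'] by simp
  have qlp: "ll$i/(x$i-l$i) \<ge> 0" for i using pos[of i] by simp
  have qup: "lu$i/(u$i-x$i) \<ge> 0" for i using pos[of i] by simp
  have m2: "\<mu>^2 \<ge> 0" by simp
  have Lb0: "Lb \<ge> 0" using Lb[of undefined] pos[of undefined] by linarith
  have T1: "\<bar>k * e$i\<bar> \<le> Q*K2*\<mu>^2" if "0 \<le> k" "k \<le> Q" for k i
  proof -
    have "\<bar>k * e$i\<bar> \<le> Q * (K2*\<mu>^2)" unfolding abs_mult
      by (rule mult_mono) (use that ei[of i] Q0' in auto)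
    then show ?thesis by (simp add: mult.assoc)
  qed
  have T2: "\<bar>k * a$i\<bar> \<le> Q*Kd*\<mu>^2" if "0 \<le> k" "k \<le> Q*\<mu>" for k i
  proof -
    have "\<bar>k * a$i\<bar> \<le> (Q*\<mu>) * (Kd*\<mu>)" unfolding abs_mult
      by (rule mult_mono) (use that aa[of i] Q0' mu in auto)
    then show ?thesis by (simp add: power2_eq_square mult_ac)
  qed
  have T3: "\<bar>t * k * e$i\<bar> \<le> Lb*K2*\<mu>^2" if "0 \<le> t" "t \<le> 1" "0 \<le> k" "k \<le> Lb" for t k i
  proof -
    have "t * k \<le> 1 * Lb" by (rule mult_mono) (use that in auto)
    then have "\<bar>t * k\<bar> \<le> Lb" using that by simp
    then have "\<bar>t * k * e$i\<bar> \<le> Lb * (K2*\<mu>^2)" unfolding abs_mult[of "t*k"]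
      by (rule mult_mono) (use ei[of i] Lb0 in auto)
    then show ?thesis by (simp add: mult.assoc)
  qed
  have HeK: "\<bar>(H *v e)$i\<bar> \<le> Hb*K2*\<mu>^2" for i using He[of i] by (simp add: mult.assoc)
  have t1: "Q*K2*\<mu>^2 \<ge> 0" "Q*Kd*\<mu>^2 \<ge> 0" "Hb*K2*\<mu>^2 \<ge> 0" "Lb*K2*\<mu>^2 \<ge> 0"
    using Q0' K20 Kd0 Hb0 Lb0 by auto
  have K3e: "K3*\<mu>^2 = Q*K2*\<mu>^2 + Q*Kd*\<mu>^2 + Hb*K2*\<mu>^2 + Lb*K2*\<mu>^2"
    unfolding K3_def Q_def by (simp add: algebra_simps)
  have dllb: "\<bar>dll$i - b$i\<bar> \<le> K3*\<mu>^2" for i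
  proof (cases "i \<in> Al")
    case False
    have p: "x$i - l$i \<noteq> 0" using pos[of i] by simp
    have "dll$i = dll_lsI l x ll mp dx i \<or> dll$i = dllC l x ll mp i" using hlI False by auto
    then show ?thesis
    proof
      assume h: "dll$i = dll_lsI l x ll mp dx i"
      have "dll$i - b$i = - (ll$i/(x$i-l$i) * e$i)" unfolding h nb[of i] dllI_diff[OF p] e_def by simp
      then have "\<bar>dll$i - b$i\<bar> \<le> Q*K2*\<mu>^2" using T1[OF qlp qlI1[OF False]] by simp
      then show ?thesis using K3e t1 by linarith
    next
      assume h: "dll$i = dllC l x ll mp i"
      have "dll$i - b$i = ll$i/(x$i-l$i) * a$i" unfolding h nb[of i] dllC_diff[OF p] by simp
      then have "\<bar>dll$i - b$i\<bar> \<le> Q*Kd*\<mu>^2" using T2[OF qlp qlI[OF False]] by simp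
      then show ?thesis using K3e t1 by linarith
    qed
  next
    case True
    have nAu: "i \<notin> Au" using True disj by auto
    have p: "u$i - x$i \<noteq> 0" "x$i - l$i > 0" using pos[of i] by auto
    define r where "r = resid g H l u x ll lu mp (-Al) (-Au) dx i"
    have rr: "r = g$i - ll$i + lu$i + (H *v dx)$i + dlu_lsI u x lu mp dx i"
      unfolding r_def resid_def using True nAu by (simp add: matrix_vector_mult_def)
    have rb: "r - b$i = (H *v e)$i + lu$i/(u$i-x$i) * e$i"
    proof -
      have "b$i = (H *v a)$i + c$i + g$i - ll$i + lu$i" using nr[of i] by linarith
      moreover have "dlu_lsI u x lu mp dx i - c$i = lu$i/(u$i-x$i) * e$i"
        unfolding nc[of i] dluI_diff[OF p(1)] e_def by simp
      moreover have "(H *v e)$i = (H *v dx)$i - (H *v a)$i"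
        unfolding e_def by (simp add: matrix_vector_mult_diff_distrib)
      ultimately show ?thesis unfolding rr by linarith
    qed
    have rbb: "\<bar>r - b$i\<bar> \<le> Hb*K2*\<mu>^2 + Q*K2*\<mu>^2"
    proof -
      have "\<bar>r - b$i\<bar> \<le> \<bar>(H *v e)$i\<bar> + \<bar>lu$i/(u$i-x$i) * e$i\<bar>"
        unfolding rb by linarith
      then show ?thesis using HeK[of i] T1[OF qup quI1[OF nAu], of i] by linarith
    qed
    have "dll$i = r \<or> dll$i = dll_lsA l x ll mp dx r i" using hlA True unfolding r_def by auto
    then show ?thesis
    proof
      assume "dll$i = r" then show ?thesis using rbb K3e t1 by linarith
    next
      assume h: "dll$i = dll_lsA l x ll mp dx r i"
      let ?t = "x$i - l$i"
      have hh: "?t * b$i + ll$i * ?t - mp + ll$i * a$i = 0"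
        using nb[of i] p(2) by (simp add: dll_lsI_def field_simps)
      have eq: "dll$i - b$i = ((r - b$i) - ?t * ll$i * e$i) / (1 + ?t^2)"
        unfolding h dll_lsA_def e_def using lsA_alg[OF hh, of r "dx$i"] by simp
      have "\<bar>dll$i - b$i\<bar> \<le> \<bar>(r - b$i) - ?t * ll$i * e$i\<bar>"
        unfolding eq by (rule div1_le) (simp add: add_pos_nonneg)
      also have "\<dots> \<le> \<bar>r - b$i\<bar> + \<bar>?t * ll$i * e$i\<bar>" by (rule abs_triangle_ineq4)
      also have "\<bar>?t * ll$i * e$i\<bar> \<le> Lb*K2*\<mu>^2"
        by (rule T3) (use p lowA[OF True] mu Lb[of i] pos[of i] in auto)
      finally show ?thesis using rbb K3e t1 by linarith
    qed
  qed
  have dlub: "\<bar>dlu$i - c$i\<bar> \<le> K3*\<mu>^2" for i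
  proof (cases "i \<in> Au")
    case False
    have p: "u$i - x$i \<noteq> 0" using pos[of i] by simp
    have "dlu$i = dlu_lsI u x lu mp dx i \<or> dlu$i = dluC u x lu mp i" using huI False by auto
    then show ?thesis
    proof
      assume h: "dlu$i = dlu_lsI u x lu mp dx i"
      have "dlu$i - c$i = lu$i/(u$i-x$i) * e$i" unfolding h nc[of i] dluI_diff[OF p] e_def by simp
      then have "\<bar>dlu$i - c$i\<bar> \<le> Q*K2*\<mu>^2" using T1[OF qup quI1[OF False]] by simp
      then show ?thesis using K3e t1 by linarith
    next
      assume h: "dlu$i = dluC u x lu mp i"
      have "dlu$i - c$i = - (lu$i/(u$i-x$i) * a$i)" unfolding h nc[of i] dluC_diff[OF p] by simp
      then have "\<bar>dlu$i - c$i\<bar> \<le> Q*Kd*\<mu>^2" using T2[OF qup quI[OF False]] by simp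
      then show ?thesis using K3e t1 by linarith
    qed
  next
    case True
    have nAl: "i \<notin> Al" using True disj by auto
    have p: "x$i - l$i \<noteq> 0" "u$i - x$i > 0" using pos[of i] by auto
    define r where "r = resid g H l u x ll lu mp (-Al) (-Au) dx i"
    have rr: "r = g$i - ll$i + lu$i + (H *v dx)$i - dll_lsI l x ll mp dx i"
      unfolding r_def resid_def using True nAl by (simp add: matrix_vector_mult_def)
    have rb: "- r - c$i = - (H *v e)$i - ll$i/(x$i-l$i) * e$i"
    proof -
      have "c$i = - (H *v a)$i + b$i - g$i + ll$i - lu$i" using nr[of i] by linarith
      moreover have "dll_lsI l x ll mp dx i - b$i = - (ll$i/(x$i-l$i) * e$i)"
        unfolding nb[of i] dllI_diff[OF p(1)] e_def by simp
      moreover have "(H *v e)$i = (H *v dx)$i - (H *v a)$i"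
        unfolding e_def by (simp add: matrix_vector_mult_diff_distrib)
      ultimately show ?thesis unfolding rr by linarith
    qed
    have rbb: "\<bar>- r - c$i\<bar> \<le> Hb*K2*\<mu>^2 + Q*K2*\<mu>^2"
    proof -
      have "\<bar>- r - c$i\<bar> \<le> \<bar>(H *v e)$i\<bar> + \<bar>ll$i/(x$i-l$i) * e$i\<bar>"
        unfolding rb by linarith
      then show ?thesis using HeK[of i] T1[OF qlp qlI1[OF nAl], of i] by linarith
    qed
    have "dlu$i = - r \<or> dlu$i = dlu_lsA u x lu mp dx r i" using huA True unfolding r_def by auto
    then show ?thesis
    proof
      assume "dlu$i = - r" then show ?thesis using rbb K3e t1 by linarith
    next
      assume h: "dlu$i = dlu_lsA u x lu mp dx r i"
      let ?t = "u$i - x$i"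
      have hh: "?t * c$i + lu$i * ?t - mp - lu$i * a$i = 0"
        using nc[of i] p(2) by (simp add: dlu_lsI_def field_simps)
      have eq: "dlu$i - c$i = ((- r - c$i) + ?t * lu$i * e$i) / (1 + ?t^2)"
        unfolding h dlu_lsA_def e_def using luA_alg[OF hh, of r "dx$i"] by simp
      have "\<bar>dlu$i - c$i\<bar> \<le> \<bar>(- r - c$i) + ?t * lu$i * e$i\<bar>"
        unfolding eq by (rule div1_le) (simp add: add_pos_nonneg)
      also have "\<dots> \<le> \<bar>- r - c$i\<bar> + \<bar>?t * lu$i * e$i\<bar>" by (rule abs_triangle_ineq)
      also have "\<bar>?t * lu$i * e$i\<bar> \<le> Lb*K2*\<mu>^2"
        by (rule T3) (use p upA[OF True] mu Lb[of i] pos[of i] in auto)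
      finally show ?thesis using rbb K3e t1 by linarith
    qed
  qed
  have nl: "norm (dll - b) \<le> real CARD('n) * (K3*\<mu>^2)"
  proof -
    have "norm (dll - b) \<le> (\<Sum>i\<in>UNIV. \<bar>(dll - b)$i\<bar>)" by (rule norm_le_l1_cart)
    also have "\<dots> \<le> (\<Sum>i\<in>(UNIV::'n set). K3*\<mu>^2)" by (rule sum_mono) (use dllb in simp)
    finally show ?thesis by simp
  qed
  have nu: "norm (dlu - c) \<le> real CARD('n) * (K3*\<mu>^2)"
  proof -
    have "norm (dlu - c) \<le> (\<Sum>i\<in>UNIV. \<bar>(dlu - c)$i\<bar>)" by (rule norm_le_l1_cart)
    also have "\<dots> \<le> (\<Sum>i\<in>(UNIV::'n set). K3*\<mu>^2)" by (rule sum_mono) (use dlub in simp)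
    finally show ?thesis by simp
  qed
  have "norm ((dx, dll, dlu) - (a, b, c)) = norm (e, dll - b, dlu - c)" unfolding e_def by simp
  also have "\<dots> \<le> norm e + (norm (dll - b) + norm (dlu - c))"
    using norm_Pair_le[of e "(dll - b, dlu - c)"] norm_Pair_le[of "dll - b" "dlu - c"] by linarith
  also have "\<dots> \<le> K2*\<mu>^2 + (real CARD('n) * (K3*\<mu>^2) + real CARD('n) * (K3*\<mu>^2))"
    using ne nl nu by linarith
  also have "\<dots> = (K2 + 2 * real CARD('n) * K3) * \<mu>^2" by (simp add: algebra_simps)
  finally show ?thesis .
qed



lemma welldef:
  fixes H :: "real^'n^'n" and g l u x ll lu dxA :: "real^'n" and A :: "'n set" and m mp :: real
  assumes pos: "\<And>i. l$i < x$i \<and> x$i < u$i \<and> ll$i > 0 \<and> lu$i > 0"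
    and m: "m > 0" and pd: "\<And>v. (\<forall>i\<in>A. v$i = 0) \<Longrightarrow> m * (norm v)^2 \<le> v \<bullet> (H *v v)"
  shows "\<exists>!dx. (\<forall>i\<in>A. dx$i = dxA$i) \<and> (\<forall>i\<in>-A. ls_row g H l u x ll lu mp A dx i)"
proof -
  define D where "D i = ll$i / (x$i - l$i) + lu$i / (u$i - x$i)" for i
  have D0: "D i \<ge> 0" for i using pos[of i] unfolding D_def by simp
  define P :: "real^'n^'n" where
    "P = (\<chi> i j. if i \<in> A then (if j = i then 1 else 0) else H$i$j + (if j = i then D i else 0))"
  have Pv: "(P *v v)$i = (if i \<in> A then v$i else (H *v v)$i + D i * v$i)" for v i
  proof (cases "i \<in> A")
    case True
    have "(P *v v)$i = (\<Sum>j\<in>UNIV. (if j = i then 1 else 0) * v$j)"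
      by (simp add: P_def matrix_vector_mult_def True)
    also have "(\<lambda>j. (if j = i then 1 else 0) * v$j) = (\<lambda>j. if j = i then v$i else 0)"
      by (rule ext) simp
    finally show ?thesis using True by simp
  next
    case False
    have "(P *v v)$i = (\<Sum>j\<in>UNIV. (H$i$j + (if j = i then D i else 0)) * v$j)"
      by (simp add: P_def matrix_vector_mult_def False)
    also have "\<dots> = (\<Sum>j\<in>UNIV. H$i$j * v$j) + (\<Sum>j\<in>UNIV. (if j = i then D i else 0) * v$j)"
      by (simp add: distrib_right sum.distrib)
    also have "(\<lambda>j. (if j = i then D i else 0) * v$j) = (\<lambda>j. if j = i then D i * v$i else 0)"
      by (rule ext) simp
    finally show ?thesis using False by (simp add: matrix_vector_mult_def)
  qed
  have lin: "linear ((*v) P)" by simp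
  have z: "v = 0" if "P *v v = 0" for v
  proof -
    have vA: "\<forall>i\<in>A. v$i = 0"
    proof
      fix i assume "i \<in> A"
      then have "v$i = (P *v v)$i" using Pv[of v i] by simp
      then show "v$i = 0" using that by simp
    qed
    have t: "v$i * ((H *v v)$i + D i * v$i) = 0" for i
    proof (cases "i \<in> A")
      case True then show ?thesis using vA by simp
    next
      case False
      then have "(H *v v)$i + D i * v$i = (P *v v)$i" using Pv[of v i] by simp
      then show ?thesis using that by simp
    qed
    have "v \<bullet> (H *v v) + (\<Sum>i\<in>UNIV. D i * (v$i)^2) = (\<Sum>i\<in>UNIV. v$i * ((H *v v)$i + D i * v$i))"
      by (simp add: inner_vec_def sum.distrib[symmetric] algebra_simps power2_eq_square)
    also have "\<dots> = 0" by (rule sum.neutral) (use t in blast)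
    finally have "v \<bullet> (H *v v) + (\<Sum>i\<in>UNIV. D i * (v$i)^2) = 0" .
    moreover have "(\<Sum>i\<in>UNIV. D i * (v$i)^2) \<ge> 0" by (rule sum_nonneg) (use D0 in simp)
    ultimately have "m * (norm v)^2 \<le> 0" using pd[OF vA] by linarith
    then have "(norm v)^2 \<le> 0" using m by (simp add: mult_le_0_iff)
    then show ?thesis by simp
  qed
  have inj: "inj ((*v) P)" using lin z by (simp add: linear_injective_0)
  have surj: "surj ((*v) P)" by (rule linear_inj_imp_surj[OF lin inj])
  define rhs :: "real^'n" where
    "rhs = (\<chi> i. if i \<in> A then dxA$i else - g$i + mp / (x$i - l$i) - mp / (u$i - x$i))"
  have char: "((\<forall>i\<in>A. dx$i = dxA$i) \<and> (\<forall>i\<in>-A. ls_row g H l u x ll lu mp A dx i))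
               \<longleftrightarrow> P *v dx = rhs" for dx
  proof -
    have "P *v dx = rhs \<longleftrightarrow> (\<forall>i. (P *v dx)$i = rhs$i)" by (simp add: vec_eq_iff)
    also have "\<dots> \<longleftrightarrow> (\<forall>i. (if i \<in> A then dx$i = dxA$i else ls_row g H l u x ll lu mp A dx i))"
      unfolding Pv rhs_def ls_row_iff D_def by (simp add: if_split_eq1 if_bool_eq_conj)
    also have "\<dots> \<longleftrightarrow> ((\<forall>i\<in>A. dx$i = dxA$i) \<and> (\<forall>i\<in>-A. ls_row g H l u x ll lu mp A dx i))"
      by auto
    finally show ?thesis by simp
  qed
  obtain v where "P *v v = rhs" using surj by (metis surjD)
  show ?thesis
  proof (rule ex1I[of _ v])
    show "(\<forall>i\<in>A. v$i = dxA$i) \<and> (\<forall>i\<in>-A. ls_row g H l u x ll lu mp A v i)"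
      using char \<open>P *v v = rhs\<close> by blast
  next
    fix y assume "(\<forall>i\<in>A. y$i = dxA$i) \<and> (\<forall>i\<in>-A. ls_row g H l u x ll lu mp A y i)"
    then have "P *v y = P *v v" using char \<open>P *v v = rhs\<close> by simp
    then show "y = v" using inj by (simp add: inj_eq)
  qed
qed



lemma pos_lower_bound:
  fixes f :: "'n::finite \<Rightarrow> real"
  assumes "\<And>i. f i > 0"
  shows "\<exists>c>0. \<forall>i. c \<le> f i"
proof -
  have fin: "finite (range f)" by simp
  have ne: "range f \<noteq> {}" by simp
  have "Min (range f) \<in> range f" using Min_in[OF fin ne] .
  then have "Min (range f) > 0" using assms by auto
  moreover have "\<forall>i. Min (range f) \<le> f i" using Min_le[OF fin] by simp
  ultimately show ?thesis by blast
qed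

lemma pd_const:
  fixes H :: "real^'n^'n" and A :: "'n set"
  assumes pd: "\<forall>v. v \<noteq> 0 \<and> (\<forall>i\<in>A. v$i = 0) \<longrightarrow> v \<bullet> (H *v v) > 0"
  shows "\<exists>m>0. \<forall>v. (\<forall>i\<in>A. v$i = 0) \<longrightarrow> m * (norm v)^2 \<le> v \<bullet> (H *v v)"
proof -
  define U where "U = {v::real^'n. \<forall>i\<in>A. v$i = 0}"
  have "U = (\<Inter>i\<in>A. {v. v$i = 0})" unfolding U_def by auto
  moreover have "closed {v::real^'n. v$i = 0}" for i
    by (rule closed_Collect_eq) (auto intro: continuous_on_component continuous_on_id continuous_on_const)
  ultimately have clU: "closed U" by auto
  define S where "S = sphere (0::real^'n) 1 \<inter> U"
  have cS: "compact S" unfolding S_def by (rule compact_Int_closed[OF compact_sphere clU])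
  define f where "f v = v \<bullet> (H *v v)" for v :: "real^'n"
  have nrm: "(1 / norm v) *\<^sub>R v \<in> S" if "v \<in> U" "v \<noteq> 0" for v
    using that unfolding S_def U_def by (simp add: norm_scaleR)
  have sc: "f ((1 / norm v) *\<^sub>R v) = f v / (norm v)^2" for v
    unfolding f_def by (simp add: matrix_vector_mult_scaleR power2_eq_square)
  show ?thesis
  proof (cases "S = {}")
    case True
    have "\<forall>v. (\<forall>i\<in>A. v$i = 0) \<longrightarrow> 1 * (norm v)^2 \<le> v \<bullet> (H *v v)"
    proof (intro allI impI)
      fix v :: "real^'n" assume "\<forall>i\<in>A. v$i = 0"
      then have "v \<in> U" unfolding U_def by simp
      then have "v = 0" using nrm True by blast
      then show "1 * (norm v)^2 \<le> v \<bullet> (H *v v)" by simp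
    qed
    then show ?thesis by (intro exI[of _ 1]) simp
  next
    case False
    have cf: "continuous_on S f" unfolding f_def by (intro continuous_intros)
    obtain v0 where v0: "v0 \<in> S" and mn: "\<forall>y\<in>S. f v0 \<le> f y"
      using continuous_attains_inf[OF cS False cf] by blast
    have "v0 \<noteq> 0" "\<forall>i\<in>A. v0$i = 0" using v0 unfolding S_def U_def by auto
    then have mpos: "f v0 > 0" using pd unfolding f_def by blast
    have "\<forall>v. (\<forall>i\<in>A. v$i = 0) \<longrightarrow> f v0 * (norm v)^2 \<le> v \<bullet> (H *v v)"
    proof (intro allI impI)
      fix v :: "real^'n" assume vA: "\<forall>i\<in>A. v$i = 0"
      show "f v0 * (norm v)^2 \<le> v \<bullet> (H *v v)"
      proof (cases "v = 0")
        case True then show ?thesis by simp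
      next
        case False
        have "v \<in> U" using vA unfolding U_def by simp
        then have "f v0 \<le> f v / (norm v)^2" using mn nrm[OF _ False] sc by metis
        then show ?thesis using False by (simp add: f_def field_simps)
      qed
    qed
    then show ?thesis using mpos by blast
  qed
qed

lemma dcoef_pos:
  fixes H :: "real^'n^'n"
  assumes p: "l$i < x$i" "x$i < u$i" "ll$i > 0" "lu$i > 0"
    and iA: "i \<in> Al \<union> Au"
    and lowA: "i\<in>Al \<Longrightarrow> ll$i \<ge> c0/2 \<and> x$i - l$i \<le> Kp*\<mu>"
    and upA: "i\<in>Au \<Longrightarrow> lu$i \<ge> c0/2 \<and> u$i - x$i \<le> Kp*\<mu>"
    and c0: "c0 > 0" and Kp: "Kp > 0" and mu: "\<mu> > 0" "4*Kp*Hb*\<mu> \<le> c0"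
    and Hent: "\<bar>H$i$i\<bar> \<le> Hb"
  shows "dcoef H l u x ll lu i > 0"
proof -
  define D where "D = ll$i / (x$i - l$i) + lu$i / (u$i - x$i)"
  have big: "c0/(2*Kp*\<mu>) \<le> D"
  proof (cases "i \<in> Al")
    case True
    have "(c0/2)/(Kp*\<mu>) \<le> ll$i / (x$i - l$i)"
      by (rule frac_le) (use lowA[OF True] p c0 in auto)
    moreover have "lu$i / (u$i - x$i) \<ge> 0" using p by simp
    ultimately show ?thesis unfolding D_def by simp
  next
    case False
    then have T: "i \<in> Au" using iA by auto
    have "(c0/2)/(Kp*\<mu>) \<le> lu$i / (u$i - x$i)"
      by (rule frac_le) (use upA[OF T] p c0 in auto)
    moreover have "ll$i / (x$i - l$i) \<ge> 0" using p by simp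
    ultimately show ?thesis unfolding D_def by simp
  qed
  have hb: "Hb \<le> c0/(4*Kp*\<mu>)" using mu Kp by (simp add: le_divide_eq mult.commute mult.left_commute)
  have eq2: "c0/(2*Kp*\<mu>) = 2 * (c0/(4*Kp*\<mu>))" by simp
  have dcD: "dcoef H l u x ll lu i = H$i$i + D" unfolding dcoef_def D_def by simp
  have "dcoef H l u x ll lu i \<ge> c0/(4*Kp*\<mu>)" using dcD big hb Hent eq2 by linarith
  moreover have "c0/(4*Kp*\<mu>) > 0" using c0 Kp mu by simp
  ultimately show ?thesis by linarith
qed


theorem mainTheorem11:
  fixes f :: "real^'n \<Rightarrow> real"
    and grad :: "real^'n \<Rightarrow> real^'n"
    and hess :: "real^'n \<Rightarrow> real^'n^'n"
    and l u xs lls lus :: "real^'n"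
    and Al Au :: "'n set"
    and \<delta> \<mu>hat C4 \<sigma> C1 :: real
    and traj :: "real \<Rightarrow> (real^'n) \<times> (real^'n) \<times> (real^'n)"
  assumes lu: "\<forall>i. l$i < u$i"
    and grad: "\<forall>x. (f has_derivative (\<lambda>h. grad x \<bullet> h)) (at x)"
    and hess: "\<forall>x. (grad has_derivative (\<lambda>h. hess x *v h)) (at x)"
    and hess_loc_lip: "\<forall>x. \<exists>r>0. \<exists>L. \<forall>y\<in>ball x r. \<forall>z\<in>ball x r.
                          norm (hess y - hess z) \<le> L * norm (y - z)"
    and Al_def: "Al = {i. xs$i = l$i}"
    and Au_def: "Au = {i. xs$i = u$i}"
    and KKT: "grad xs - lls + lus = 0"
    and feas: "\<forall>i. l$i \<le> xs$i \<and> xs$i \<le> u$i"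
    and mult_nonneg: "\<forall>i. lls$i \<ge> 0 \<and> lus$i \<ge> 0"
    and compl: "\<forall>i. (xs$i - l$i) * lls$i = 0 \<and> (u$i - xs$i) * lus$i = 0"
    and strict_compl: "\<forall>i. (xs$i - l$i) + lls$i > 0 \<and> (u$i - xs$i) + lus$i > 0"
    and hess_pd: "\<forall>v. v \<noteq> 0 \<and> (\<forall>i\<in>Al \<union> Au. v$i = 0) \<longrightarrow> v \<bullet> (hess xs *v v) > 0"
    and \<delta>_pos: "\<delta> > 0"
    and Fprime_inv: "\<exists>M. \<forall>x ll lu. (x, ll, lu) \<in> ball (xs, lls, lus) \<delta> \<longrightarrow>
                        bij (Fprime hess l u x ll lu) \<and>
                        (\<forall>v. norm (inv (Fprime hess l u x ll lu) v) \<le> M * norm v)"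
    and \<mu>hat_pos: "\<mu>hat > 0"
    and traj_lip: "\<exists>L. \<forall>\<mu>1\<in>{0<..\<mu>hat}. \<forall>\<mu>2\<in>{0<..\<mu>hat}.
                       norm (traj \<mu>1 - traj \<mu>2) \<le> L * \<bar>\<mu>1 - \<mu>2\<bar>"
    and traj_ball: "\<forall>\<mu>\<in>{0<..\<mu>hat}. traj \<mu> \<in> ball (xs, lls, lus) \<delta>"
    and traj_eq: "\<forall>\<mu>\<in>{0<..\<mu>hat}.
                    Fmu grad l u \<mu> (fst (traj \<mu>)) (fst (snd (traj \<mu>))) (snd (snd (traj \<mu>))) = 0"
    and traj_dist: "\<forall>\<mu>\<in>{0<..\<mu>hat}. norm (traj \<mu> - (xs, lls, lus)) \<le> C4 * \<mu>"
    and \<sigma>: "0 < \<sigma>" "\<sigma> < 1"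
    and C1: "C1 > 0"
  shows "\<exists>\<rho>>0. \<exists>\<mu>bar. 0 < \<mu>bar \<and> \<mu>bar \<le> \<mu>hat \<and> (\<exists>C>0.
     \<forall>\<mu>\<in>{0<..\<mu>bar}. \<forall>x ll lu.
       (x, ll, lu) \<in> ball (xs, lls, lus) \<delta>
       \<and> (\<forall>i. l$i < x$i \<and> x$i < u$i) \<and> (\<forall>i. ll$i > 0 \<and> lu$i > 0)
       \<and> norm ((x, ll, lu) - traj \<mu>) < \<rho>
       \<and> norm (Fmu grad l u \<mu> x ll lu) \<le> C1 * \<mu>
       \<longrightarrow>
       (\<comment> \<open>well-definedness: step (i) is defined, and (ii) is uniquely solvable\<close>
        (\<forall>i\<in>Al \<union> Au. dcoef (hess x) l u x ll lu i \<noteq> 0)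
        \<and> (\<forall>dxA. (\<forall>i\<in>Al. dxA$i = dxS (grad x) (hess x) l u x ll lu (\<sigma>*\<mu>) i
                          \<or> dxA$i = dxCl l x ll (\<sigma>*\<mu>) i)
                \<and> (\<forall>i\<in>Au. dxA$i = dxS (grad x) (hess x) l u x ll lu (\<sigma>*\<mu>) i
                          \<or> dxA$i = dxCu u x lu (\<sigma>*\<mu>) i)
               \<longrightarrow> (\<exists>!dx. (\<forall>i\<in>Al \<union> Au. dx$i = dxA$i)
                        \<and> (\<forall>i\<in>-(Al \<union> Au). ls_row (grad x) (hess x) l u x ll lu (\<sigma>*\<mu>) (Al \<union> Au) dx i))))
       \<and> (\<forall>dx dll dlu dN.
            (\<forall>i\<in>Al. dx$i = dxS (grad x) (hess x) l u x ll lu (\<sigma>*\<mu>) i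
                      \<or> dx$i = dxCl l x ll (\<sigma>*\<mu>) i)
          \<and> (\<forall>i\<in>Au. dx$i = dxS (grad x) (hess x) l u x ll lu (\<sigma>*\<mu>) i
                      \<or> dx$i = dxCu u x lu (\<sigma>*\<mu>) i)
          \<and> (\<forall>i\<in>-(Al \<union> Au). ls_row (grad x) (hess x) l u x ll lu (\<sigma>*\<mu>) (Al \<union> Au) dx i)
          \<and> (\<forall>i\<in>-Al. dll$i = dll_lsI l x ll (\<sigma>*\<mu>) dx i \<or> dll$i = dllC l x ll (\<sigma>*\<mu>) i)
          \<and> (\<forall>i\<in>-Au. dlu$i = dlu_lsI u x lu (\<sigma>*\<mu>) dx i \<or> dlu$i = dluC u x lu (\<sigma>*\<mu>) i)
          \<and> (\<forall>i\<in>Al. dll$i = resid (grad x) (hess x) l u x ll lu (\<sigma>*\<mu>) (-Al) (-Au) dx i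
                     \<or> dll$i = dll_lsA l x ll (\<sigma>*\<mu>) dx
                                 (resid (grad x) (hess x) l u x ll lu (\<sigma>*\<mu>) (-Al) (-Au) dx i) i)
          \<and> (\<forall>i\<in>Au. dlu$i = - resid (grad x) (hess x) l u x ll lu (\<sigma>*\<mu>) (-Al) (-Au) dx i
                     \<or> dlu$i = dlu_lsA u x lu (\<sigma>*\<mu>) dx
                                 (resid (grad x) (hess x) l u x ll lu (\<sigma>*\<mu>) (-Al) (-Au) dx i) i)
          \<and> Fprime hess l u x ll lu dN = - Fmu grad l u (\<sigma>*\<mu>) x ll lu
          \<longrightarrow> norm ((dx, dll, dlu) - dN) \<le> C * \<mu>^2))"
proof -
  let ?n = "real CARD('n)"
  have n1: "?n \<ge> 1"
  proof -
    have "0 < CARD('n)" by simp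
    then show ?thesis by linarith
  qed
  have disj: "Al \<inter> Au = {}"
  proof -
    { fix i assume "i \<in> Al" "i \<in> Au"
      then have "l$i = u$i" unfolding Al_def Au_def by simp
      with lu have False by (metis less_irrefl) }
    then show ?thesis by blast
  qed
  obtain c0 where c0: "c0 > 0"
    and c0b: "\<forall>i. c0 \<le> min (xs$i - l$i + lls$i) (u$i - xs$i + lus$i)"
    using pos_lower_bound[of "\<lambda>i. min (xs$i - l$i + lls$i) (u$i - xs$i + lus$i)"] strict_compl
    by auto
  have AlP: "lls$i \<ge> c0" if "i \<in> Al" for i
    using that c0b[rule_format, of i] unfolding Al_def by auto
  have IlP: "xs$i - l$i \<ge> c0 \<and> lls$i = 0" if "i \<notin> Al" for i
  proof -
    have "xs$i - l$i > 0" using that feas unfolding Al_def by (auto simp: less_le)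
    moreover have "(xs$i - l$i) * lls$i = 0" using compl by blast
    ultimately have "lls$i = 0" by simp
    then show ?thesis using c0b[rule_format, of i] by auto
  qed
  have AuP: "lus$i \<ge> c0" if "i \<in> Au" for i
    using that c0b[rule_format, of i] unfolding Au_def by auto
  have IuP: "u$i - xs$i \<ge> c0 \<and> lus$i = 0" if "i \<notin> Au" for i
  proof -
    have "u$i - xs$i > 0" using that feas unfolding Au_def by (auto simp: less_le)
    moreover have "(u$i - xs$i) * lus$i = 0" using compl by blast
    ultimately have "lus$i = 0" by simp
    then show ?thesis using c0b[rule_format, of i] by auto
  qed
  obtain M where M: "\<forall>x ll lu. (x, ll, lu) \<in> ball (xs, lls, lus) \<delta> \<longrightarrow>
                        bij (Fprime hess l u x ll lu) \<and>
                        (\<forall>v. norm (inv (Fprime hess l u x ll lu) v) \<le> M * norm v)"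
    using Fprime_inv by blast
  obtain m0 where m0: "m0 > 0"
    and pd0: "\<forall>v. (\<forall>i\<in>Al \<union> Au. v$i = 0) \<longrightarrow> m0 * (norm v)^2 \<le> v \<bullet> (hess xs *v v)"
    using pd_const[OF hess_pd] by blast
  obtain r L where r: "r > 0" and lip: "\<forall>y\<in>ball xs r. \<forall>z\<in>ball xs r.
                          norm (hess y - hess z) \<le> L * norm (y - z)"
    using hess_loc_lip by blast
  define L' where "L' = \<bar>L\<bar> + 1"
  have L'1: "L' \<ge> 1" unfolding L'_def by simp
  define Be where "Be = norm (hess xs) + 1"
  have Be0: "Be \<ge> 0" unfolding Be_def by simp
  define Hb where "Hb = ?n * ?n * Be"
  have BeHb: "Be \<le> Hb" unfolding Hb_def using n1 Be0
    by (metis mult_1 mult_mono' order_trans mult_right_mono zero_le_one less_le_trans le_numeral_extra(4) mult_nonneg_nonneg)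
  have Hb0: "Hb \<ge> 0" using BeHb Be0 by linarith
  define \<eta> where "\<eta> = min (c0/2) (min (r/2) (min (1/L') (m0/(2*?n*?n*L'))))"
  have eta0: "\<eta> > 0" unfolding \<eta>_def using c0 r L'1 m0 n1 by auto
  have eta1: "\<eta> \<le> c0/2" "\<eta> < r" "L' * \<eta> \<le> 1" "?n*?n*(L'*\<eta>) \<le> m0/2" "\<eta> \<le> 1"
  proof -
    show "\<eta> \<le> c0/2" unfolding \<eta>_def by simp
    show "\<eta> < r" unfolding \<eta>_def using r by simp
    have "\<eta> \<le> 1/L'" unfolding \<eta>_def by simp
    then show "L' * \<eta> \<le> 1" using L'1 by (simp add: field_simps)
    then show "\<eta> \<le> 1" using L'1 eta0 by (smt (verit) mult_le_cancel_right1)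
    have "\<eta> \<le> m0/(2*?n*?n*L')" unfolding \<eta>_def by simp
    then show "?n*?n*(L'*\<eta>) \<le> m0/2" using L'1 n1 by (simp add: field_simps)
  qed
  define Kp where "Kp = 2*(1+C1)/c0"
  have Kp: "Kp > 0" unfolding Kp_def using C1 c0 by simp
  define Lb where "Lb = norm lls + norm lus + 1"
  define Kd where "Kd = \<bar>M\<bar> * (C1 + 2*?n)"
  define m where "m = m0/2"
  have m: "m > 0" unfolding m_def using m0 by simp
  define K1 where "K1 = 8*Hb*Kd*Kp/c0 + 2*Kp*Kd/c0"
  define K2 where "K2 = (1 + Hb/m) * ?n * K1"
  define K3 where "K3 = (2*Kp/c0)*K2 + (2*Kp/c0)*Kd + Hb*K2 + Lb*K2"
  define C where "C = max (K2 + 2 * ?n * K3) 1"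
  define \<rho> where "\<rho> = \<eta>/2"
  define \<mu>bar where "\<mu>bar = min \<mu>hat (min 1 (min (\<eta>/(2*(\<bar>C4\<bar>+1))) (min (1/Kp) (c0/(4*Kp*Hb+1)))))"
  have mub0: "\<mu>bar > 0" unfolding \<mu>bar_def using \<mu>hat_pos eta0 Kp c0 Hb0
    by (simp add: add_nonneg_pos)
  show ?thesis
    apply (rule exI[of _ \<rho>])
    apply (rule conjI)
    subgoal unfolding \<rho>_def using eta0 by simp
    apply (rule exI[of _ \<mu>bar])
    apply (intro conjI)
    subgoal by (rule mub0)
    subgoal unfolding \<mu>bar_def by simp
    apply (rule exI[of _ C])
    apply (intro conjI)
    subgoal unfolding C_def by simp
  proof (intro ballI allI impI)
    fix \<mu> x ll lu
    assume \<mu>: "\<mu> \<in> {0<..\<mu>bar}"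
    assume hyp: "(x, ll, lu) \<in> ball (xs, lls, lus) \<delta>
       \<and> (\<forall>i. l$i < x$i \<and> x$i < u$i) \<and> (\<forall>i. ll$i > 0 \<and> lu$i > 0)
       \<and> norm ((x, ll, lu) - traj \<mu>) < \<rho>
       \<and> norm (Fmu grad l u \<mu> x ll lu) \<le> C1 * \<mu>"
    have mu0: "\<mu> > 0" and mub: "\<mu> \<le> \<mu>bar" using \<mu> by auto
    have muhat: "\<mu> \<in> {0<..\<mu>hat}" using mu0 mub unfolding \<mu>bar_def by auto
    have mu1: "\<mu> \<le> 1" using mub unfolding \<mu>bar_def by simp
    have mu2: "Kp * \<mu> \<le> 1"
    proof -
      have "\<mu> \<le> 1/Kp" using mub unfolding \<mu>bar_def by simp
      then show ?thesis using Kp by (simp add: field_simps)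
    qed
    have mu3: "4*Kp*Hb*\<mu> \<le> c0"
    proof -
      have d: "4*Kp*Hb+1 > 0" using Kp Hb0 by (simp add: add_nonneg_pos)
      have "\<mu> \<le> c0/(4*Kp*Hb+1)" using mub unfolding \<mu>bar_def by simp
      then have "(4*Kp*Hb+1) * \<mu> \<le> c0" using d by (simp add: field_simps)
      then show ?thesis using mu0 by (simp add: algebra_simps)
    qed
    have mu4: "\<bar>C4\<bar> * \<mu> \<le> \<eta>/2"
    proof -
      have "\<mu> \<le> \<eta>/(2*(\<bar>C4\<bar>+1))" using mub unfolding \<mu>bar_def by simp
      then have "(2*(\<bar>C4\<bar>+1)) * \<mu> \<le> \<eta>" by (simp add: field_simps add_nonneg_pos)
      then show ?thesis using mu0 by (simp add: algebra_simps)
    qed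
    have inball: "(x, ll, lu) \<in> ball (xs, lls, lus) \<delta>" using hyp by blast
    have pos: "\<And>i. l$i < x$i \<and> x$i < u$i \<and> ll$i > 0 \<and> lu$i > 0" using hyp by blast
    have Fb: "norm (Fmu grad l u \<mu> x ll lu) \<le> C1 * \<mu>" using hyp by blast
    have near: "norm ((x, ll, lu) - traj \<mu>) < \<rho>" using hyp by blast
    have dist: "norm ((x, ll, lu) - (xs, lls, lus)) \<le> \<eta>"
    proof -
      have "norm ((x, ll, lu) - (xs, lls, lus)) \<le> norm ((x, ll, lu) - traj \<mu>) + norm (traj \<mu> - (xs, lls, lus))"
        using norm_triangle_ineq[of "(x, ll, lu) - traj \<mu>" "traj \<mu> - (xs, lls, lus)"] by simp
      also have "\<dots> \<le> \<rho> + C4 * \<mu>" using near traj_dist muhat by fastforce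
      also have "\<dots> \<le> \<eta>" using mu4 unfolding \<rho>_def using abs_ge_self[of C4] mult_right_mono[of C4 "\<bar>C4\<bar>" \<mu>] mu0 by linarith
      finally show ?thesis .
    qed
    have dtrip: "(x, ll, lu) - (xs, lls, lus) = (x - xs, ll - lls, lu - lus)" by simp
    have dxn: "norm (x - xs) \<le> \<eta>" using dist norm_fst_le[of "x - xs" "(ll - lls, lu - lus)"] unfolding dtrip by linarith
    have dlln: "norm (ll - lls) \<le> \<eta>" using dist norm_fst_le[of "ll - lls" "lu - lus"]
        norm_snd_le[of "(ll - lls, lu - lus)" "x - xs"] unfolding dtrip by linarith
    have dlun: "norm (lu - lus) \<le> \<eta>" using dist norm_snd_le[of "lu - lus" "ll - lls"]
        norm_snd_le[of "(ll - lls, lu - lus)" "x - xs"] unfolding dtrip by linarith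
    have dxi: "\<bar>x$i - xs$i\<bar> \<le> \<eta>" for i using dxn component_le_norm_cart[of "x - xs" i] by simp
    have dlli: "\<bar>ll$i - lls$i\<bar> \<le> \<eta>" for i using dlln component_le_norm_cart[of "ll - lls" i] by simp
    have dlui: "\<bar>lu$i - lus$i\<bar> \<le> \<eta>" for i using dlun component_le_norm_cart[of "lu - lus" i] by simp
    have xb: "x \<in> ball xs r" using dxn eta1(2) by (simp add: dist_norm norm_minus_commute)
    have xsb: "xs \<in> ball xs r" using r by simp
    have Hd: "norm (hess x - hess xs) \<le> L' * \<eta>"
    proof -
      have "norm (hess x - hess xs) \<le> L * norm (x - xs)" using lip xb xsb by blast
      also have "\<dots> \<le> L' * norm (x - xs)" unfolding L'_def by (rule mult_right_mono) auto
      also have "\<dots> \<le> L' * \<eta>" using dxn L'1 by simp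
      finally show ?thesis .
    qed
    have ent: "\<bar>A$i$j\<bar> \<le> norm A" for A :: "real^'n^'n" and i j
      using component_le_norm_cart[of "A$i" j] Finite_Cartesian_Product.norm_nth_le[of A i] by linarith
    have Hent: "\<bar>hess x$i$j\<bar> \<le> Hb" for i j
    proof -
      have "hess x$i$j = hess xs$i$j + (hess x - hess xs)$i$j" by simp
      then have "\<bar>hess x$i$j\<bar> \<le> \<bar>hess xs$i$j\<bar> + \<bar>(hess x - hess xs)$i$j\<bar>" by linarith
      also have "\<dots> \<le> norm (hess xs) + L' * \<eta>" using ent[of "hess xs" i j] ent[of "hess x - hess xs" i j] Hd by linarith
      also have "\<dots> \<le> Be" unfolding Be_def using eta1(3) by linarith
      finally show ?thesis using BeHb by linarith
    qed
    have Hnorm: "norm (hess x *v v) \<le> Hb * norm v" for v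
    proof -
      have "\<And>i j. \<bar>hess x$i$j\<bar> \<le> Be"
      proof -
        fix i j
        have "hess x$i$j = hess xs$i$j + (hess x - hess xs)$i$j" by simp
        then have "\<bar>hess x$i$j\<bar> \<le> \<bar>hess xs$i$j\<bar> + \<bar>(hess x - hess xs)$i$j\<bar>" by linarith
        also have "\<dots> \<le> norm (hess xs) + L' * \<eta>" using ent[of "hess xs" i j] ent[of "hess x - hess xs" i j] Hd by linarith
        also have "\<dots> \<le> Be" unfolding Be_def using eta1(3) by linarith
        finally show "\<bar>hess x$i$j\<bar> \<le> Be" .
      qed
      then show ?thesis using mv_bound[of "hess x" Be v] unfolding Hb_def by simp
    qed
    have pdx: "m * (norm v)^2 \<le> v \<bullet> (hess x *v v)" if vA: "\<forall>i\<in>Al\<union>Au. v$i = 0" for v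
    proof -
      have e1: "\<bar>(hess x - hess xs)$i$j\<bar> \<le> L' * \<eta>" for i j using ent[of "hess x - hess xs" i j] Hd by linarith
      have nd: "norm ((hess x - hess xs) *v v) \<le> ?n * ?n * (L' * \<eta>) * norm v"
        using mv_bound[of "hess x - hess xs" "L' * \<eta>" v] e1 by simp
      have "\<bar>v \<bullet> ((hess x - hess xs) *v v)\<bar> \<le> norm v * norm ((hess x - hess xs) *v v)"
        by (rule Cauchy_Schwarz_ineq2)
      also have "\<dots> \<le> norm v * (?n * ?n * (L' * \<eta>) * norm v)" by (rule mult_left_mono[OF nd]) simp
      also have "\<dots> \<le> norm v * ((m0/2) * norm v)"
        by (rule mult_left_mono[OF mult_right_mono]) (use eta1(4) in auto)
      finally have q: "\<bar>v \<bullet> ((hess x - hess xs) *v v)\<bar> \<le> (m0/2) * (norm v)^2" by (simp add: power2_eq_square mult_ac)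
      have "v \<bullet> (hess x *v v) = v \<bullet> (hess xs *v v) + v \<bullet> ((hess x - hess xs) *v v)"
        by (simp add: matrix_vector_mult_diff_rdistrib inner_diff_right)
      then show ?thesis using pd0 vA q unfolding m_def by fastforce
    qed
    have Fc: "\<bar>ll$i * (x$i - l$i) - \<mu>\<bar> \<le> C1 * \<mu> \<and> \<bar>lu$i * (u$i - x$i) - \<mu>\<bar> \<le> C1 * \<mu>" for i
    proof -
      let ?F = "Fmu grad l u \<mu> x ll lu"
      have "norm (fst (snd ?F)) \<le> norm ?F" "norm (snd (snd ?F)) \<le> norm ?F"
        using norm_fst_le[of "fst (snd ?F)" "snd (snd ?F)"] norm_snd_le[of "snd ?F" "fst ?F"]
          norm_snd_le[of "snd (snd ?F)" "fst (snd ?F)"] by auto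
      moreover have "\<bar>fst (snd ?F) $ i\<bar> \<le> norm (fst (snd ?F))" "\<bar>snd (snd ?F) $ i\<bar> \<le> norm (snd (snd ?F))"
        by (rule component_le_norm_cart)+
      ultimately show ?thesis using Fb by (simp add: Fmu_def)
    qed
    have lowA: "ll$i \<ge> c0/2 \<and> x$i - l$i \<le> Kp*\<mu>" if "i \<in> Al" for i
    proof -
      have g: "ll$i \<ge> c0/2" using AlP[OF that] dlli[of i] eta1(1) by linarith
      have "(c0/2) * (x$i - l$i) \<le> ll$i * (x$i - l$i)" by (rule mult_right_mono[OF g]) (use pos[of i] in simp)
      also have "\<dots> \<le> (1 + C1) * \<mu>" using Fc[of i] abs_le_D1 unfolding distrib_right by fastforce
      finally have "(c0/2) * (x$i - l$i) \<le> (1 + C1) * \<mu>" .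
      then have "x$i - l$i \<le> Kp*\<mu>" unfolding Kp_def using c0 by (simp add: field_simps)
      then show ?thesis using g by simp
    qed
    have lowI: "x$i - l$i \<ge> c0/2 \<and> ll$i \<le> Kp*\<mu>" if "i \<notin> Al" for i
    proof -
      have g: "x$i - l$i \<ge> c0/2" using IlP[OF that] dxi[of i] eta1(1) by linarith
      have "ll$i * (c0/2) \<le> ll$i * (x$i - l$i)" by (rule mult_left_mono[OF g]) (use pos[of i] in simp)
      also have "\<dots> \<le> (1 + C1) * \<mu>" using Fc[of i] abs_le_D1 unfolding distrib_right by fastforce
      finally have "ll$i * (c0/2) \<le> (1 + C1) * \<mu>" .
      then have "ll$i \<le> Kp*\<mu>" unfolding Kp_def using c0 by (simp add: field_simps)
      then show ?thesis using g by simp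
    qed
    have upA: "lu$i \<ge> c0/2 \<and> u$i - x$i \<le> Kp*\<mu>" if "i \<in> Au" for i
    proof -
      have g: "lu$i \<ge> c0/2" using AuP[OF that] dlui[of i] eta1(1) by linarith
      have "(c0/2) * (u$i - x$i) \<le> lu$i * (u$i - x$i)" by (rule mult_right_mono[OF g]) (use pos[of i] in simp)
      also have "\<dots> \<le> (1 + C1) * \<mu>" using Fc[of i] abs_le_D1 unfolding distrib_right by fastforce
      finally have "(c0/2) * (u$i - x$i) \<le> (1 + C1) * \<mu>" .
      then have "u$i - x$i \<le> Kp*\<mu>" unfolding Kp_def using c0 by (simp add: field_simps)
      then show ?thesis using g by simp
    qed
    have upI: "u$i - x$i \<ge> c0/2 \<and> lu$i \<le> Kp*\<mu>" if "i \<notin> Au" for i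
    proof -
      have g: "u$i - x$i \<ge> c0/2" using IuP[OF that] dxi[of i] eta1(1) by linarith
      have "lu$i * (c0/2) \<le> lu$i * (u$i - x$i)" by (rule mult_left_mono[OF g]) (use pos[of i] in simp)
      also have "\<dots> \<le> (1 + C1) * \<mu>" using Fc[of i] abs_le_D1 unfolding distrib_right by fastforce
      finally have "lu$i * (c0/2) \<le> (1 + C1) * \<mu>" .
      then have "lu$i \<le> Kp*\<mu>" unfolding Kp_def using c0 by (simp add: field_simps)
      then show ?thesis using g by simp
    qed
    have Lbb: "ll$i \<le> Lb \<and> lu$i \<le> Lb" for i
    proof -
      have "lls$i \<le> norm lls" "lus$i \<le> norm lus"
        using component_le_norm_cart[of lls i] component_le_norm_cart[of lus i] by auto
      then show ?thesis unfolding Lb_def using abs_le_D1[OF dlli[of i]] abs_le_D1[OF dlui[of i]]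
          norm_ge_zero[of lls] norm_ge_zero[of lus] eta1(5) by (intro conjI; linarith)
    qed
    have G1: "(\<forall>i\<in>Al \<union> Au. dcoef (hess x) l u x ll lu i \<noteq> 0)
        \<and> (\<forall>dxA. (\<forall>i\<in>Al. dxA$i = dxS (grad x) (hess x) l u x ll lu (\<sigma>*\<mu>) i
                          \<or> dxA$i = dxCl l x ll (\<sigma>*\<mu>) i)
                \<and> (\<forall>i\<in>Au. dxA$i = dxS (grad x) (hess x) l u x ll lu (\<sigma>*\<mu>) i
                          \<or> dxA$i = dxCu u x lu (\<sigma>*\<mu>) i)
               \<longrightarrow> (\<exists>!dx. (\<forall>i\<in>Al \<union> Au. dx$i = dxA$i)
                        \<and> (\<forall>i\<in>-(Al \<union> Au). ls_row (grad x) (hess x) l u x ll lu (\<sigma>*\<mu>) (Al \<union> Au) dx i)))" (is ?G1)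
    proof (intro conjI ballI allI impI)
      fix i assume "i \<in> Al \<union> Au"
      then have "dcoef (hess x) l u x ll lu i > 0"
        using dcoef_pos[of l i x u ll lu Al Au c0 Kp \<mu> Hb "hess x"] pos[of i] lowA upA c0 Kp mu0 mu3 Hent[of i i]
        by blast
      then show "dcoef (hess x) l u x ll lu i \<noteq> 0" by simp
    next
      fix dxA :: "real^'n"
      show "\<exists>!dx. (\<forall>i\<in>Al \<union> Au. dx$i = dxA$i)
                \<and> (\<forall>i\<in>-(Al \<union> Au). ls_row (grad x) (hess x) l u x ll lu (\<sigma>*\<mu>) (Al \<union> Au) dx i)"
        by (rule welldef[OF pos m pdx]) blast
    qed
    have G2: "\<forall>dx dll dlu dN. (\<forall>i\<in>Al. dx$i = dxS (grad x) (hess x) l u x ll lu (\<sigma>*\<mu>) i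
                      \<or> dx$i = dxCl l x ll (\<sigma>*\<mu>) i)
          \<and> (\<forall>i\<in>Au. dx$i = dxS (grad x) (hess x) l u x ll lu (\<sigma>*\<mu>) i
                      \<or> dx$i = dxCu u x lu (\<sigma>*\<mu>) i)
          \<and> (\<forall>i\<in>-(Al \<union> Au). ls_row (grad x) (hess x) l u x ll lu (\<sigma>*\<mu>) (Al \<union> Au) dx i)
          \<and> (\<forall>i\<in>-Al. dll$i = dll_lsI l x ll (\<sigma>*\<mu>) dx i \<or> dll$i = dllC l x ll (\<sigma>*\<mu>) i)
          \<and> (\<forall>i\<in>-Au. dlu$i = dlu_lsI u x lu (\<sigma>*\<mu>) dx i \<or> dlu$i = dluC u x lu (\<sigma>*\<mu>) i)
          \<and> (\<forall>i\<in>Al. dll$i = resid (grad x) (hess x) l u x ll lu (\<sigma>*\<mu>) (-Al) (-Au) dx i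
                     \<or> dll$i = dll_lsA l x ll (\<sigma>*\<mu>) dx
                                 (resid (grad x) (hess x) l u x ll lu (\<sigma>*\<mu>) (-Al) (-Au) dx i) i)
          \<and> (\<forall>i\<in>Au. dlu$i = - resid (grad x) (hess x) l u x ll lu (\<sigma>*\<mu>) (-Al) (-Au) dx i
                     \<or> dlu$i = dlu_lsA u x lu (\<sigma>*\<mu>) dx
                                 (resid (grad x) (hess x) l u x ll lu (\<sigma>*\<mu>) (-Al) (-Au) dx i) i)
          \<and> Fprime hess l u x ll lu dN = - Fmu grad l u (\<sigma>*\<mu>) x ll lu
      \<longrightarrow> norm ((dx, dll, dlu) - dN) \<le> C * \<mu>^2" (is ?G2)
    proof (intro allI impI)
    fix dx dll dlu dN
    assume H: "(\<forall>i\<in>Al. dx$i = dxS (grad x) (hess x) l u x ll lu (\<sigma>*\<mu>) i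
                      \<or> dx$i = dxCl l x ll (\<sigma>*\<mu>) i)
          \<and> (\<forall>i\<in>Au. dx$i = dxS (grad x) (hess x) l u x ll lu (\<sigma>*\<mu>) i
                      \<or> dx$i = dxCu u x lu (\<sigma>*\<mu>) i)
          \<and> (\<forall>i\<in>-(Al \<union> Au). ls_row (grad x) (hess x) l u x ll lu (\<sigma>*\<mu>) (Al \<union> Au) dx i)
          \<and> (\<forall>i\<in>-Al. dll$i = dll_lsI l x ll (\<sigma>*\<mu>) dx i \<or> dll$i = dllC l x ll (\<sigma>*\<mu>) i)
          \<and> (\<forall>i\<in>-Au. dlu$i = dlu_lsI u x lu (\<sigma>*\<mu>) dx i \<or> dlu$i = dluC u x lu (\<sigma>*\<mu>) i)
          \<and> (\<forall>i\<in>Al. dll$i = resid (grad x) (hess x) l u x ll lu (\<sigma>*\<mu>) (-Al) (-Au) dx i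
                     \<or> dll$i = dll_lsA l x ll (\<sigma>*\<mu>) dx
                                 (resid (grad x) (hess x) l u x ll lu (\<sigma>*\<mu>) (-Al) (-Au) dx i) i)
          \<and> (\<forall>i\<in>Au. dlu$i = - resid (grad x) (hess x) l u x ll lu (\<sigma>*\<mu>) (-Al) (-Au) dx i
                     \<or> dlu$i = dlu_lsA u x lu (\<sigma>*\<mu>) dx
                                 (resid (grad x) (hess x) l u x ll lu (\<sigma>*\<mu>) (-Al) (-Au) dx i) i)
          \<and> Fprime hess l u x ll lu dN = - Fmu grad l u (\<sigma>*\<mu>) x ll lu"
    obtain a b c where abc: "dN = (a, b, c)" by (metis prod_cases3)
    have N: "Fprime hess l u x ll lu (a, b, c) = - Fmu grad l u (\<sigma>*\<mu>) x ll lu" using H abc by simp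
    have Fs: "norm (Fmu grad l u (\<sigma>*\<mu>) x ll lu) \<le> (C1 + 2*?n) * \<mu>"
    proof -
      define k :: "real^'n" where "k = (\<chi> i. \<mu> - \<sigma>*\<mu>)"
      have eq: "Fmu grad l u (\<sigma>*\<mu>) x ll lu = Fmu grad l u \<mu> x ll lu + (0, k, k)"
        unfolding Fmu_def k_def by (simp add: vec_eq_iff)
      have nk: "norm k \<le> ?n * \<mu>"
      proof -
        have "norm k \<le> (\<Sum>i\<in>UNIV. \<bar>k$i\<bar>)" by (rule norm_le_l1_cart)
        also have "\<dots> \<le> (\<Sum>i\<in>(UNIV::'n set). \<mu>)"
          by (rule sum_mono) (use \<sigma> mu0 in \<open>simp add: k_def abs_of_nonneg\<close>)
        finally show ?thesis by simp
      qed
      have "norm ((0::real^'n), k, k) \<le> norm (0::real^'n) + (norm k + norm k)"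
        using norm_Pair_le[of "0::real^'n" "(k,k)"] norm_Pair_le[of k k] by linarith
      then have "norm ((0::real^'n), k, k) \<le> 2 * ?n * \<mu>" using nk by simp
      then show ?thesis unfolding eq using norm_triangle_ineq[of "Fmu grad l u \<mu> x ll lu" "(0, k, k)"] Fb
        by (simp add: algebra_simps)
    qed
    have Kdb: "norm (a, b, c) \<le> Kd * \<mu>"
    proof -
      have bj: "bij (Fprime hess l u x ll lu)" and iv: "\<forall>v. norm (inv (Fprime hess l u x ll lu) v) \<le> M * norm v"
        using M inball by blast+
      have "(a, b, c) = inv (Fprime hess l u x ll lu) (Fprime hess l u x ll lu (a, b, c))"
        using bij_is_inj[OF bj] by simp
      also have "\<dots> = inv (Fprime hess l u x ll lu) (- Fmu grad l u (\<sigma>*\<mu>) x ll lu)" using N by simp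
      finally have "norm (a, b, c) \<le> M * norm (- Fmu grad l u (\<sigma>*\<mu>) x ll lu)" using iv by metis
      also have "\<dots> \<le> \<bar>M\<bar> * norm (Fmu grad l u (\<sigma>*\<mu>) x ll lu)" by (simp add: mult_right_mono)
      also have "\<dots> \<le> \<bar>M\<bar> * ((C1 + 2*?n) * \<mu>)" by (rule mult_left_mono[OF Fs]) simp
      finally show ?thesis unfolding Kd_def by (simp add: mult_ac)
    qed
    have pl: "\<And>i. x$i - l$i > 0" and pu: "\<And>i. u$i - x$i > 0" using pos by auto
    have "norm ((dx, dll, dlu) - (a, b, c)) \<le> (K2 + 2 * ?n * K3) * \<mu>^2"
      unfolding K2_def K3_def K1_def
      by (rule core[OF pos disj c0 Kp mu0 mu1 mu2 mu3 Hb0 Hent Hnorm m pdx Kdb Lbb lowA lowI upA upI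
                 newton_comp(1)[OF N refl pl pu] newton_comp(2)[OF N refl pl pu]
                 newton_comp(3)[OF N refl pl pu] newton_comp(4)[OF N refl pl pu]])
         (use H in blast)+
    also have "\<dots> \<le> C * \<mu>^2" unfolding C_def by (rule mult_right_mono) auto
    finally show "norm ((dx, dll, dlu) - dN) \<le> C * \<mu>^2" using abc by simp
    qed
    show "?G1 \<and> ?G2" using G1 G2 by blast
  qed
qed

end
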